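(* Fix real numbers $\alpha,\beta,\gamma,\delta$ with $\alpha\ne0$. Let $\mathscr T$ be a graph-enriched Schröder tree on a finite linear order $\ell$ with $|\ell|\ge2$, with root $r$ and $g=\bigvee\mathscr T$. Suppose that for every internal vertex $w\neq r$, the graph $g_{\ell_w}$ is regular and either $\alpha\gamma>0$ or ($\gamma=0$ and $g_{\ell_w}$ is connected). Then $$\sigma(U(g))=\Big(\prod_{w\in\mathrm{Iv}(\mathscr T),\,w\ne r}\mu_{\delta N_{rw}}\big(\sigma(U(a_w,g_w))\big)\Big)\cdot\sigma(U(a_r,g_r)),$$ where $\mu_{\delta N_{rw}}(\sigma(U(a_w,g_w)))$ is obtained from $\sigma(U(a_w,g_w))$ by removing one occurrence of $q_w=(\alpha+\delta)\mathrm{reg}(g_{\ell_w})+\beta+\gamma|\ell_w|$ (when it occurs) and then adding $\delta N_{rw}$ to every remaining element.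
   Context: All graphs finite and simple. $U(g)=\alpha A(g)+\beta I+\gamma J+\delta D(g)$ ($A$ adjacency, $D$ diagonal degree matrix, $J$ all-ones). Spectra are multisets written multiplicatively (product = multiset union). Generalized composition: for a segmented partition $\pi=(\ell_1,\dots,\ell_k)$ of $\ell$ (nonempty consecutive segments whose concatenation is $\ell$), graphs $g_{\ell_j}$ on $\ell_j$ and a graph $h$ on $\pi$, $\bigvee_h(g_{\ell_1},\dots,g_{\ell_k})$ has vertex set $\ell$ and edges those of the $g_{\ell_j}$ plus all $\{x,y\}$, $x\in\ell_i,y\in\ell_j$, $\{\ell_i,\ell_j\}\in E(h)$. Graph-enriched Schröder tree on $\ell$: rooted plane tree with leaves the elements of $\ell$ left to right, each internal vertex having at least two children, with a graph $g_v$ on $\pi_v=(\ell_{v_1},\dots,\ell_{v_k})$ for each internal $v$ (children $v_1,\dots,v_k$ left to right, $\ell_u$ the leaves below $u$). $\bigvee$ of a leaf is the one-vertex graph and $\bigvee\mathscr T=\bigvee_{g_r}(\bigvee\mathscr T_{r_1},\dots,\bigvee\mathscr T_{r_k})$; $g_{\ell_u}=\bigvee\mathscr T_u$; $a_v=(g_{\ell_{v_1}},\dots,g_{\ell_{v_k}})$. For internal $v$ with $n_i=|\ell_{v_i}|$, $\rho_i=\mathrm{reg}(g_{\ell_{v_i}})$ and $N_i=\sum_{s:\{\ell_{v_s},\ell_{v_i}\}\in E(g_v)}n_s$, let $p_i=\alpha\rho_i+\beta+\gamma n_i+\delta(\rho_i+N_i)$; $U(a_v,g_v)$ is the $k\times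 k$ matrix with $(i,j)$ entry $\sqrt{n_in_j}\big(\alpha A(g_v)_{ij}+\gamma(1-\delta_{ij})\big)+\delta_{ij}p_i$ ($\delta_{ij}$ Kronecker delta, $A(g_v)$ indexed by $\pi_v$ in order). For non-root internal $w$ with parent $u$, $N_w=\sum_{x:\{\ell_x,\ell_w\}\in E(g_u)}|\ell_x|$, and $N_{rw}=N_{w_1}+\cdots+N_{w_m}$ along the path $r=w_0,w_1,\dots,w_m=w$. *)

theory Defs
  imports "Jordan_Normal_Form.Char_Poly" "HOL-Library.Multiset"
begin

definition adj :: "'a set set \<Rightarrow> 'a \<Rightarrow> 'a \<Rightarrow> bool" where
  "adj E x y \<longleftrightarrow> x \<noteq> y \<and> {x, y} \<in> E"

definition deg :: "'a set \<Rightarrow> 'a set set \<Rightarrow> 'a \<Rightarrow> nat" where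
  "deg V E x = card {y \<in> V. adj E x y}"

definition regular :: "'a set \<Rightarrow> 'a set set \<Rightarrow> bool" where
  "regular V E \<longleftrightarrow> (\<exists>d. \<forall>x\<in>V. deg V E x = d)"

text \<open>degree of a regular graph (on a nonempty vertex set)\<close>
definition reg :: "'a set \<Rightarrow> 'a set set \<Rightarrow> nat" where
  "reg V E = deg V E (SOME x. x \<in> V)"

definition connected_graph :: "'a set \<Rightarrow> 'a set set \<Rightarrow> bool" where
  "connected_graph V E \<longleftrightarrow> V \<noteq> {} \<and>
     (\<forall>x\<in>V. \<forall>y\<in>V. (x, y) \<in> {(a, b). a \<in> V \<and> b \<in> V \<and> adj E a b}\<^sup>*)"

definition spec :: "real mat \<Rightarrow> complex multiset" where
  "spec M = (THE S. char_poly (map_mat complex_of_real M) =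
                    prod_mset (image_mset (\<lambda>a. [:- a, 1:]) S))"

definition Umat :: "real \<Rightarrow> real \<Rightarrow> real \<Rightarrow> real \<Rightarrow> nat \<Rightarrow> nat set set \<Rightarrow> real mat" where
  "Umat \<alpha> \<beta> \<gamma> \<delta> n E = mat n n (\<lambda>(i, j).
      \<alpha> * (if adj E i j then 1 else 0) + \<beta> * (if i = j then 1 else 0) + \<gamma>
      + \<delta> * (if i = j then real (deg {0..<n} E i) else 0))"

text \<open>A node carries a graph on the positions {0..<k} of its k children
  (position i stands for the segment of leaves below the i-th child).\<close>
datatype stree = Leaf nat | Node "nat set set" "stree list"

fun leaves :: "stree \<Rightarrow> nat list" where
  "leaves (Leaf x) = [x]"
| "leaves (Node E ts) = concat (map leaves ts)"

fun wf_stree :: "stree \<Rightarrow> bool" where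
  "wf_stree (Leaf x) = True"
| "wf_stree (Node E ts) = (2 \<le> length ts \<and>
      E \<subseteq> {{i, j} | i j. i < length ts \<and> j < length ts \<and> i \<noteq> j} \<and>
      (\<forall>t\<in>set ts. wf_stree t))"

fun compose :: "stree \<Rightarrow> nat set set" where
  "compose (Leaf x) = {}"
| "compose (Node E ts) = (\<Union>t\<in>set ts. compose t) \<union>
      {{x, y} | x y i j. {i, j} \<in> E \<and> i < length ts \<and> j < length ts \<and>
                         x \<in> set (leaves (ts ! i)) \<and> y \<in> set (leaves (ts ! j))}"

text \<open>Vertices of the tree are addressed by paths (lists of child positions) from the root.\<close>
fun subtree :: "stree \<Rightarrow> nat list \<Rightarrow> stree option" where
  "subtree t [] = Some t"
| "subtree (Leaf x) (i # p) = None"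
| "subtree (Node E ts) (i # p) = (if i < length ts then subtree (ts ! i) p else None)"

definition is_internal :: "stree \<Rightarrow> bool" where
  "is_internal t \<longleftrightarrow> (case t of Node _ _ \<Rightarrow> True | Leaf _ \<Rightarrow> False)"

definition internal_vertices :: "stree \<Rightarrow> nat list set" where
  "internal_vertices T = {p. \<exists>t. subtree T p = Some t \<and> is_internal t}"

definition node_graph :: "stree \<Rightarrow> nat set set" where
  "node_graph t = (case t of Node E ts \<Rightarrow> E | Leaf _ \<Rightarrow> {})"

definition node_children :: "stree \<Rightarrow> stree list" where
  "node_children t = (case t of Node E ts \<Rightarrow> ts | Leaf _ \<Rightarrow> [])"

definition Nblock :: "nat set set \<Rightarrow> stree list \<Rightarrow> nat \<Rightarrow> nat" where
  "Nblock E ts i = (\<Sum>s\<in>{s. s < length ts \<and> adj E s i}. length (leaves (ts ! s)))"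

definition Npath :: "stree \<Rightarrow> nat list \<Rightarrow> nat" where
  "Npath T p = (\<Sum>j<length p.
      let u = the (subtree T (take j p)) in
      Nblock (node_graph u) (node_children u) (p ! j))"

definition Unode :: "real \<Rightarrow> real \<Rightarrow> real \<Rightarrow> real \<Rightarrow> stree \<Rightarrow> real mat" where
  "Unode \<alpha> \<beta> \<gamma> \<delta> t = (let E = node_graph t; ts = node_children t; k = length ts;
      n = (\<lambda>i. real (length (leaves (ts ! i))));
      \<rho> = (\<lambda>i. real (reg (set (leaves (ts ! i))) (compose (ts ! i))));
      p = (\<lambda>i. \<alpha> * \<rho> i + \<beta> + \<gamma> * n i + \<delta> * (\<rho> i + real (Nblock E ts i)))
    in mat k k (\<lambda>(i, j). sqrt (n i * n j) *
          (\<alpha> * (if adj E i j then 1 else 0) + \<gamma> * (if i = j then 0 else 1))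
        + (if i = j then p i else 0)))"

definition mu_shift :: "complex \<Rightarrow> complex \<Rightarrow> complex multiset \<Rightarrow> complex multiset" where
  "mu_shift q c S = image_mset (\<lambda>x. x + c) (S - {#q#})"

end

theory Submission
  imports Defs
begin

lemma sign_sq: "(of_int (sign p) :: 'a :: comm_ring_1) * of_int (sign p) = 1"
  unfolding sign_def by auto

lemma det_perm_both: assumes A: "A \<in> carrier_mat n n" and p: "p permutes {0..<n}"
  shows "det (mat n n (\<lambda>(i,j). A $$ (p i, p j))) = det (A :: 'a :: comm_ring_1 mat)"
proof -
  have pn: "\<And>i. i < n \<Longrightarrow> p i < n" using permutes_in_image[OF p] by auto
  define C where "C = mat n n (\<lambda>(i,j). A $$ (i, p j))"
  have C: "C \<in> carrier_mat n n" unfolding C_def by auto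
  have 1: "mat n n (\<lambda>(i,j). A $$ (p i, p j)) = mat n n (\<lambda>(i,j). C $$ (p i, j))"
    by (rule eq_matI, auto simp: C_def pn)
  have 2: "det C = det (mat n n (\<lambda>(i,j). (transpose_mat A) $$ (p i, j)))"
  proof -
    have "det C = det (transpose_mat C)" using det_transpose[OF C] by simp
    also have "transpose_mat C = mat n n (\<lambda>(i,j). (transpose_mat A) $$ (p i, j))"
      by (rule eq_matI, insert A, auto simp: C_def pn)
    finally show ?thesis .
  qed
  have TA: "transpose_mat A \<in> carrier_mat n n" using A by auto
  show ?thesis unfolding 1 det_permute_rows[OF C p] 2 det_permute_rows[OF TA p]
    det_transpose[OF A] by (simp add: sign_sq mult.assoc[symmetric])
qed

lemma char_poly_perm: assumes A: "A \<in> carrier_mat n n" and p: "p permutes {0..<n}"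
  shows "char_poly (mat n n (\<lambda>(i,j). A $$ (p i, p j))) = char_poly (A :: 'a :: comm_ring_1 mat)"
proof -
  have pn: "\<And>i. i < n \<Longrightarrow> p i < n" using permutes_in_image[OF p] by auto
  have inj: "\<And>i j. p i = p j \<longleftrightarrow> i = j" using permutes_inj[OF p] by (auto dest: injD)
  have "char_poly_matrix (mat n n (\<lambda>(i,j). A $$ (p i, p j))) =
     mat n n (\<lambda>(i,j). char_poly_matrix A $$ (p i, p j))"
    by (rule eq_matI, insert A, auto simp: char_poly_matrix_def pn inj)
  thus ?thesis unfolding char_poly_def
    by (simp add: det_perm_both[OF char_poly_matrix_closed[OF A] p])
qed

lemma char_poly_four_block_lower_left_zero: assumes A1: "A1 \<in> carrier_mat n n"
  and A2: "A2 \<in> carrier_mat n m" and A4: "A4 \<in> carrier_mat m m"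
  shows "char_poly (four_block_mat A1 A2 (0\<^sub>m m n) A4) = char_poly A1 * char_poly (A4 :: 'a :: idom mat)"
proof -
  let ?cm = "\<lambda> A. [:0, 1:] \<cdot>\<^sub>m 1\<^sub>m (dim_row A) + map_mat (\<lambda>a. [:- a:]) A"
  let ?B2 = "map_mat (\<lambda>a. [:- a:]) A2"
  have "char_poly (four_block_mat A1 A2 (0\<^sub>m m n) A4) = det (?cm (four_block_mat A1 A2 (0\<^sub>m m n) A4))"
    unfolding char_poly_defs using A1 A4 by simp
  also have "?cm (four_block_mat A1 A2 (0\<^sub>m m n) A4) = four_block_mat (?cm A1) ?B2 (0\<^sub>m m n) (?cm A4)"
    by (rule eq_matI, insert A1 A2 A4, auto simp: one_poly_def)
  also have "det \<dots> = det (?cm A1) * det (?cm A4)"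
    by (rule det_four_block_mat_lower_left_zero, insert A1 A2 A4, auto)
  also have "\<dots> = char_poly A1 * char_poly A4" unfolding char_poly_defs ..
  finally show ?thesis .
qed

lemma char_poly_split: assumes A: "A \<in> carrier_mat n n" and ab: "a \<le> b" "b \<le> n"
  and zero: "\<And>i j. a \<le> i \<Longrightarrow> i < b \<Longrightarrow> j < n \<Longrightarrow> (j < a \<or> b \<le> j) \<Longrightarrow> A $$ (i,j) = 0"
  shows "char_poly A = char_poly (mat (n-(b-a)) (n-(b-a)) (\<lambda>(i,j). A $$ (if i < a then i else i + (b-a), if j < a then j else j + (b-a))))
     * char_poly (mat (b-a) (b-a) (\<lambda>(i,j). A $$ (a+i, a+j)) :: 'a :: idom mat)"
proof -
  define d where "d = b - a"
  define m where "m = n - d"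
  define \<pi> where "\<pi> i = (if i < a then i else if i < m then i + d else if i < n then i - m + a else i)" for i
  define \<psi> where "\<psi> j = (if j < a then j else if j < b then j - a + m else if j < n then j - d else j)" for j
  have bij: "bij_betw \<pi> {0..<n} {0..<n}"
    by (rule bij_betw_byWitness[of _ \<psi>], insert ab, auto simp: \<pi>_def \<psi>_def d_def m_def)
  have perm: "\<pi> permutes {0..<n}"
    by (rule bij_imp_permutes[OF bij], insert ab, auto simp: \<pi>_def m_def d_def)
  define A1 where "A1 = mat m m (\<lambda>(i,j). A $$ (if i < a then i else i + d, if j < a then j else j + d))"
  define A2 where "A2 = mat m d (\<lambda>(i,j). A $$ (if i < a then i else i + d, a + j))"
  define A4 where "A4 = mat d d (\<lambda>(i,j). A $$ (a+i, a+j))"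
  have eq: "mat n n (\<lambda>(i,j). A $$ (\<pi> i, \<pi> j)) = four_block_mat A1 A2 (0\<^sub>m d m) A4"
  proof (rule eq_matI)
    fix i j assume i: "i < dim_row (four_block_mat A1 A2 (0\<^sub>m d m) A4)"
      and j: "j < dim_col (four_block_mat A1 A2 (0\<^sub>m d m) A4)"
    hence i: "i < n" and j: "j < n" using ab by (auto simp: A1_def A4_def d_def m_def)
    show "mat n n (\<lambda>(i,j). A $$ (\<pi> i, \<pi> j)) $$ (i, j) = four_block_mat A1 A2 (0\<^sub>m d m) A4 $$ (i, j)"
    proof (cases "i < m")
      case True
      then show ?thesis using i j ab by (auto simp: A1_def A2_def A4_def \<pi>_def d_def m_def)
    next
      case False
      then show ?thesis using i j ab
        by (auto simp: A1_def A2_def A4_def \<pi>_def d_def m_def intro!: zero)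
    qed
  qed (insert ab, auto simp: A1_def A4_def d_def m_def)
  have "char_poly A = char_poly (mat n n (\<lambda>(i,j). A $$ (\<pi> i, \<pi> j)))"
    using char_poly_perm[OF A perm] by simp
  also have "\<dots> = char_poly A1 * char_poly A4" unfolding eq
    by (rule char_poly_four_block_lower_left_zero, auto simp: A1_def A2_def A4_def)
  finally show ?thesis unfolding A1_def A4_def d_def m_def .
qed

definition rho :: "nat \<Rightarrow> nat \<Rightarrow> nat \<Rightarrow> nat" where
  "rho s p i = (if i \<le> s then i else i + (p - 1))"
definition colset :: "nat \<Rightarrow> nat \<Rightarrow> nat \<Rightarrow> nat set" where
  "colset s p j = (if j = s then {s..<s+p} else {rho s p j})"
definition collapse :: "'a :: comm_ring_1 mat \<Rightarrow> nat \<Rightarrow> nat \<Rightarrow> nat \<Rightarrow> 'a mat" where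
  "collapse M n s p = mat (n-(p-1)) (n-(p-1)) (\<lambda>(i,j). \<Sum>y\<in>colset s p j. M $$ (rho s p i, y))"
definition redblk :: "'a :: comm_ring_1 mat \<Rightarrow> nat \<Rightarrow> nat \<Rightarrow> 'a mat" where
  "redblk M s p = mat (p-1) (p-1) (\<lambda>(i,j). M $$ (s+1+i, s+1+j) - M $$ (s, s+1+j))"

lemma sum_ind_mult: fixes f :: "nat \<Rightarrow> 'a :: comm_ring_1" shows "S \<subseteq> {0..<n} \<Longrightarrow> (\<Sum>k = 0..<n. f k * (if k \<in> S then 1 else 0)) = sum f S"
proof -
  assume S: "S \<subseteq> {0..<n}"
  have "(\<Sum>k = 0..<n. f k * (if k \<in> S then 1 else 0)) = (\<Sum>k = 0..<n. if k \<in> S then f k else 0)"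
    by (rule sum.cong, auto)
  also have "\<dots> = sum f ({0..<n} \<inter> S)" by (rule sum.inter_restrict[symmetric], simp)
  also have "{0..<n} \<inter> S = S" using S by auto
  finally show ?thesis .
qed

lemma sum_two_delta: "i < (n::nat) \<Longrightarrow> s < n \<Longrightarrow>
  (\<Sum>k = 0..<n. ((if k = i then 1 else 0) + (if k = s then c else 0)) * f k) = f i + c * (f s :: 'a :: comm_ring_1)"
proof -
  assume i: "i < n" and s: "s < n"
  have "(\<Sum>k = 0..<n. ((if k = i then 1 else 0) + (if k = s then c else 0)) * f k)
     = (\<Sum>k = 0..<n. (if k = i then f k else 0) + (if k = s then c * f k else 0))"
    by (rule sum.cong, auto simp: algebra_simps)
  also have "\<dots> = f i + c * f s" unfolding sum.distrib sum.delta[OF finite_atLeastLessThan] using i s by simp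
  finally show ?thesis .
qed

lemma char_poly_collapse: fixes M :: "'a :: idom mat"
  assumes M: "M \<in> carrier_mat n n" and sp: "s + p \<le> n" "1 \<le> p"
  and H1: "\<And>x j. s \<le> x \<Longrightarrow> x < s+p \<Longrightarrow> j < n \<Longrightarrow> (j < s \<or> s+p \<le> j) \<Longrightarrow> M $$ (x,j) = M $$ (s,j)"
  and H2: "\<And>x. s \<le> x \<Longrightarrow> x < s+p \<Longrightarrow> (\<Sum>y\<in>{s..<s+p}. M $$ (x,y)) = (\<Sum>y\<in>{s..<s+p}. M $$ (s,y))"
  shows "char_poly M = char_poly (collapse M n s p) * char_poly (redblk M s p)"
proof -
  define c where "c i = (s < i \<and> i < s+p)" for i
  define P :: "'a mat" where "P = mat n n (\<lambda>(i,j). if i = j \<or> (j = s \<and> c i) then 1 else 0)"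
  define Q :: "'a mat" where "Q = mat n n (\<lambda>(i,j). if i = j then 1 else if j = s \<and> c i then -1 else 0)"
  define Y where "Y = mat n n (\<lambda>(i,j). if j = s then \<Sum>y\<in>{s..<s+p}. M $$ (i,y) else M $$ (i,j))"
  define N where "N = mat n n (\<lambda>(i,j). Y $$ (i,j) - (if c i then Y $$ (s,j) else 0))"
  have P: "P \<in> carrier_mat n n" and Q: "Q \<in> carrier_mat n n" and Y: "Y \<in> carrier_mat n n"
    and N: "N \<in> carrier_mat n n" by (auto simp: P_def Q_def Y_def N_def)
  have sn: "s < n" using sp by auto
  have cs: "\<not> c s" by (auto simp: c_def)
  have MP: "M * P = Y"
  proof (rule eq_matI)
    fix i j assume ij: "i < dim_row Y" "j < dim_col Y"
    hence i: "i < n" and j: "j < n" by (auto simp: Y_def)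
    have "\<And>k. k < n \<Longrightarrow> P $$ (k,j) = (if k \<in> (if j = s then {s..<s+p} else {j}) then 1 else 0)"
      using j sp by (auto simp: P_def c_def)
    hence "(M * P) $$ (i,j) = (\<Sum>k = 0..<n. M $$ (i,k) * (if k \<in> (if j = s then {s..<s+p} else {j}) then 1 else 0))"
      using i j M P by (simp add: scalar_prod_def)
    also have "\<dots> = (\<Sum>k\<in>(if j = s then {s..<s+p} else {j}). M $$ (i,k))"
      by (rule sum_ind_mult, insert j sp, auto)
    finally show "(M * P) $$ (i,j) = Y $$ (i,j)" using i j by (auto simp: Y_def)
  qed (insert M P, auto simp: Y_def)
  have QY: "Q * Y = N"
  proof (rule eq_matI)
    fix i j assume ij: "i < dim_row N" "j < dim_col N"
    hence i: "i < n" and j: "j < n" by (auto simp: N_def)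
    have "\<And>k. k < n \<Longrightarrow> Q $$ (i,k) = (if k = i then 1 else 0) + (if k = s then (if c i then -1 else 0) else 0)"
      using i cs by (auto simp: Q_def)
    hence "(Q * Y) $$ (i,j) = (\<Sum>k = 0..<n. ((if k = i then 1 else 0) + (if k = s then (if c i then -1 else 0) else 0)) * Y $$ (k,j))"
      using i j Y Q by (simp add: scalar_prod_def)
    also have "\<dots> = Y $$ (i,j) + (if c i then -1 else 0) * Y $$ (s,j)"
      by (rule sum_two_delta[OF i sn])
    finally show "(Q * Y) $$ (i,j) = N $$ (i,j)" using i j by (auto simp: N_def)
  qed (insert Q Y, auto simp: N_def)
  have PQ: "P * Q = 1\<^sub>m n"
  proof (rule eq_matI)
    fix i j assume ij: "i < dim_row (1\<^sub>m n :: 'a mat)" "j < dim_col (1\<^sub>m n :: 'a mat)"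
    hence i: "i < n" and j: "j < n" by auto
    have "\<And>k. k < n \<Longrightarrow> P $$ (i,k) = (if k = i then 1 else 0) + (if k = s then (if c i then 1 else 0) else 0)"
      using i cs by (auto simp: P_def)
    hence "(P * Q) $$ (i,j) = (\<Sum>k = 0..<n. ((if k = i then 1 else 0) + (if k = s then (if c i then 1 else 0) else 0)) * Q $$ (k,j))"
      using i j P Q by (simp add: scalar_prod_def)
    also have "\<dots> = Q $$ (i,j) + (if c i then 1 else 0) * Q $$ (s,j)"
      by (rule sum_two_delta[OF i sn])
    also have "Q $$ (i,j) = (if i = j then 1 else if j = s \<and> c i then -1 else 0)" using i j by (simp add: Q_def)
    also have "Q $$ (s,j) = (if s = j then 1 else 0)" using sn j cs by (simp add: Q_def)
    also have "(if i = j then 1 else if j = s \<and> c i then -1 else 0) + (if c i then 1 else 0) * (if s = j then 1 else 0) = (if i = j then 1 else (0::'a))"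
      using cs by (cases "i = j"; cases "c i"; cases "s = j"; simp)
    finally show "(P * Q) $$ (i,j) = (1\<^sub>m n :: 'a mat) $$ (i,j)" using i j by simp
  qed (insert P Q, auto)
  have QP: "Q * P = 1\<^sub>m n"
  proof (rule eq_matI)
    fix i j assume ij: "i < dim_row (1\<^sub>m n :: 'a mat)" "j < dim_col (1\<^sub>m n :: 'a mat)"
    hence i: "i < n" and j: "j < n" by auto
    have "\<And>k. k < n \<Longrightarrow> Q $$ (i,k) = (if k = i then 1 else 0) + (if k = s then (if c i then -1 else 0) else 0)"
      using i cs by (auto simp: Q_def)
    hence "(Q * P) $$ (i,j) = (\<Sum>k = 0..<n. ((if k = i then 1 else 0) + (if k = s then (if c i then -1 else 0) else 0)) * P $$ (k,j))"
      using i j P Q by (simp add: scalar_prod_def)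
    also have "\<dots> = P $$ (i,j) + (if c i then -1 else 0) * P $$ (s,j)"
      by (rule sum_two_delta[OF i sn])
    also have "P $$ (i,j) = (if i = j \<or> (j = s \<and> c i) then 1 else 0)" using i j by (simp add: P_def)
    also have "P $$ (s,j) = (if s = j then 1 else 0)" using sn j cs by (simp add: P_def)
    also have "(if i = j \<or> (j = s \<and> c i) then 1 else 0) + (if c i then -1 else 0) * (if s = j then 1 else 0) = (if i = j then 1 else (0::'a))"
      using cs by (cases "i = j"; cases "c i"; cases "s = j"; simp)
    finally show "(Q * P) $$ (i,j) = (1\<^sub>m n :: 'a mat) $$ (i,j)" using i j by simp
  qed (insert P Q, auto)
  have NQMP: "N = Q * M * P" using QY MP assoc_mult_mat[OF Q M P] by simp
  have QM: "Q * M \<in> carrier_mat n n" using Q M by auto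
  have "P * N * Q = P * (Q * M) * (P * Q)"
    unfolding NQMP using assoc_mult_mat[OF P QM P] assoc_mult_mat[OF mult_carrier_mat[OF P QM] P Q] by simp
  also have "\<dots> = M" unfolding PQ using assoc_mult_mat[OF P Q M, symmetric] PQ M P QM by simp
  finally have MPNQ: "M = P * N * Q" by simp
  have sim: "similar_mat M N"
    by (rule similar_matI[OF _ PQ QP MPNQ], insert M N P Q, auto)
  have "char_poly M = char_poly N" by (rule char_poly_similar[OF sim])
  also have "\<dots> = char_poly (mat (n-(s+p-(s+1))) (n-(s+p-(s+1))) (\<lambda>(i,j). N $$ (if i < s+1 then i else i + (s+p-(s+1)), if j < s+1 then j else j + (s+p-(s+1)))))
     * char_poly (mat (s+p-(s+1)) (s+p-(s+1)) (\<lambda>(i,j). N $$ (s+1+i, s+1+j)))"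
  proof (rule char_poly_split[OF N])
    fix i j assume i: "s+1 \<le> i" "i < s+p" and j: "j < n" "j < s+1 \<or> s+p \<le> j"
    have ci: "c i" using i by (auto simp: c_def)
    show "N $$ (i,j) = 0"
    proof (cases "j = s")
      case True
      thus ?thesis using i j ci sp H2[of i] by (auto simp: N_def Y_def)
    next
      case False
      thus ?thesis using i j ci sp H1[of i j] by (auto simp: N_def Y_def)
    qed
  qed (insert sp, auto)
  also have "mat (n-(s+p-(s+1))) (n-(s+p-(s+1))) (\<lambda>(i,j). N $$ (if i < s+1 then i else i + (s+p-(s+1)), if j < s+1 then j else j + (s+p-(s+1))))
     = collapse M n s p"
  proof (rule eq_matI)
    fix i j assume "i < dim_row (collapse M n s p)" "j < dim_col (collapse M n s p)"
    hence i: "i < n - (p-1)" and j: "j < n - (p-1)" by (auto simp: collapse_def)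
    have ri: "rho s p i < n" "\<not> c (rho s p i)" using i sp by (auto simp: rho_def c_def)
    have rj: "rho s p j < n" "rho s p j = s \<longleftrightarrow> j = s" using j sp by (auto simp: rho_def)
    have e1: "(if i < s+1 then i else i + (s+p-(s+1))) = rho s p i" "(if j < s+1 then j else j + (s+p-(s+1))) = rho s p j"
      using sp by (auto simp: rho_def)
    show "mat (n-(s+p-(s+1))) (n-(s+p-(s+1))) (\<lambda>(i,j). N $$ (if i < s+1 then i else i + (s+p-(s+1)), if j < s+1 then j else j + (s+p-(s+1)))) $$ (i,j)
      = collapse M n s p $$ (i,j)"
    proof -
      have "mat (n-(s+p-(s+1))) (n-(s+p-(s+1))) (\<lambda>(i,j). N $$ (if i < s+1 then i else i + (s+p-(s+1)), if j < s+1 then j else j + (s+p-(s+1)))) $$ (i,j)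
        = N $$ (rho s p i, rho s p j)" using i j sp by (subst index_mat, auto simp: rho_def)
      also have "\<dots> = Y $$ (rho s p i, rho s p j)" using ri rj unfolding N_def by simp
      also have "\<dots> = (\<Sum>y\<in>colset s p j. M $$ (rho s p i, y))"
        using ri rj unfolding Y_def colset_def by simp
      also have "\<dots> = collapse M n s p $$ (i,j)" using i j unfolding collapse_def by simp
      finally show ?thesis .
    qed
  qed (insert sp, auto simp: collapse_def)
  also have "mat (s+p-(s+1)) (s+p-(s+1)) (\<lambda>(i,j). N $$ (s+1+i, s+1+j)) = redblk M s p"
    by (rule eq_matI, insert sp, auto simp: N_def Y_def redblk_def c_def)
  finally show ?thesis .
qed

definition off :: "nat list \<Rightarrow> nat \<Rightarrow> nat" where "off ns i = sum_list (take i ns)"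
definition blk :: "nat list \<Rightarrow> nat \<Rightarrow> nat set" where "blk ns i = {off ns i..<off ns i + ns ! i}"

lemma off_Suc: "i < length ns \<Longrightarrow> off ns (Suc i) = off ns i + ns ! i"
  unfolding off_def by (simp add: take_Suc_conv_app_nth)

lemma off_mono: "i \<le> j \<Longrightarrow> off ns i \<le> off ns j"
  unfolding off_def
proof -
  assume "i \<le> j"
  then obtain d where j: "j = i + d" by (metis le_add_diff_inverse)
  show "sum_list (take i ns) \<le> sum_list (take j ns)" unfolding j take_add by simp
qed

lemma off_le: "off ns i \<le> sum_list ns"
  unfolding off_def by (metis append_take_drop_id le_add1 sum_list_append)

lemma off_length: "off ns (length ns) = sum_list ns" unfolding off_def by simp

lemma blk_le: "i < length ns \<Longrightarrow> x \<in> blk ns i \<Longrightarrow> x < sum_list ns"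
  using off_Suc[of i ns] off_le[of ns "Suc i"] unfolding blk_def by auto

lemma blk_disj: "i < j \<Longrightarrow> j < length ns \<Longrightarrow> blk ns i \<inter> blk ns j = {}"
  using off_Suc[of i ns] off_mono[of "Suc i" j ns] unfolding blk_def by auto

lemma sum_shift_ivl: "(\<Sum>y\<in>{a..<a+p}. f (b + (y - a))) = (\<Sum>z\<in>{b..<b+(p::nat)}. f z)"
  by (rule sum.reindex_bij_witness[of _ "\<lambda>z. z - b + a" "\<lambda>y. b + (y - a)"], auto)

lemma sum_blocks: "t \<le> length ns \<Longrightarrow> (\<Sum>j<t. \<Sum>y\<in>blk ns j. f y) = (\<Sum>y<off ns t. f y)"
proof (induction t)
  case 0 thus ?case by (simp add: off_def)
next
  case (Suc t)
  have "(\<Sum>j<Suc t. \<Sum>y\<in>blk ns j. f y) = (\<Sum>y<off ns t. f y) + (\<Sum>y\<in>blk ns t. f y)"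
    using Suc by simp
  also have "\<dots> = (\<Sum>y<off ns (Suc t). f y)" unfolding off_Suc[of t ns] blk_def using Suc(2)
    by (simp add: off_Suc lessThan_atLeast0 sum.atLeastLessThan_concat)
  finally show ?case .
qed

definition Rm :: "nat list \<Rightarrow> nat \<Rightarrow> nat \<Rightarrow> nat" where
  "Rm ns t i = (if i < t then off ns i else off ns t + (i - t))"
definition Cm :: "nat list \<Rightarrow> nat \<Rightarrow> nat \<Rightarrow> nat set" where
  "Cm ns t j = (if j < t then blk ns j else {off ns t + (j - t)})"
definition Gm :: "'a :: comm_ring_1 mat \<Rightarrow> nat list \<Rightarrow> nat \<Rightarrow> 'a mat" where
  "Gm M ns t = mat (t + (sum_list ns - off ns t)) (t + (sum_list ns - off ns t))
     (\<lambda>(i,j). \<Sum>y\<in>Cm ns t j. M $$ (Rm ns t i, y))"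

definition quot :: "'a :: comm_ring_1 mat \<Rightarrow> nat list \<Rightarrow> 'a mat" where
  "quot M ns = mat (length ns) (length ns) (\<lambda>(i,j). \<Sum>y\<in>blk ns j. M $$ (off ns i, y))"

lemma Gm_0: "M \<in> carrier_mat (sum_list ns) (sum_list ns) \<Longrightarrow> Gm M ns 0 = M"
  by (rule eq_matI, auto simp: Gm_def Cm_def Rm_def off_def)

lemma Gm_last: "Gm M ns (length ns) = quot M ns"
  by (rule eq_matI, auto simp: Gm_def Cm_def Rm_def quot_def off_length)

lemma Gm_step: fixes M :: "'a :: comm_ring_1 mat"
  assumes t: "t < length ns" and pos: "ns ! t \<ge> 1"
  shows "collapse (Gm M ns t) (t + (sum_list ns - off ns t)) t (ns ! t) = Gm M ns (Suc t)"
    and "redblk (Gm M ns t) t (ns ! t) = redblk M (off ns t) (ns ! t)"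
proof -
  let ?p = "ns ! t"
  have oS: "off ns (Suc t) = off ns t + ?p" using off_Suc[OF t] .
  have le: "off ns t + ?p \<le> sum_list ns" using off_le[of ns "Suc t"] oS by simp
  show "collapse (Gm M ns t) (t + (sum_list ns - off ns t)) t ?p = Gm M ns (Suc t)"
  proof (rule eq_matI)
    show "dim_row (collapse (Gm M ns t) (t + (sum_list ns - off ns t)) t ?p) = dim_row (Gm M ns (Suc t))"
      using le pos oS by (simp add: collapse_def Gm_def)
    show "dim_col (collapse (Gm M ns t) (t + (sum_list ns - off ns t)) t ?p) = dim_col (Gm M ns (Suc t))"
      using le pos oS by (simp add: collapse_def Gm_def)
    fix i j assume "i < dim_row (Gm M ns (Suc t))" "j < dim_col (Gm M ns (Suc t))"
    hence i: "i < Suc t + (sum_list ns - off ns (Suc t))" and j: "j < Suc t + (sum_list ns - off ns (Suc t))"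
      by (auto simp: Gm_def)
    have dims: "t + (sum_list ns - off ns t) - (?p - 1) = Suc t + (sum_list ns - off ns (Suc t))"
      using le pos oS by simp
    have ri: "rho t ?p i < t + (sum_list ns - off ns t)" using i le pos oS by (auto simp: rho_def)
    have Ri: "Rm ns t (rho t ?p i) = Rm ns (Suc t) i" using i le pos oS by (cases "i < t"; cases "i = t"; auto simp: rho_def Rm_def)
    have "collapse (Gm M ns t) (t + (sum_list ns - off ns t)) t ?p $$ (i,j)
       = (\<Sum>y\<in>colset t ?p j. Gm M ns t $$ (rho t ?p i, y))"
      unfolding collapse_def dims using i j by simp
    also have "\<dots> = (\<Sum>y\<in>Cm ns (Suc t) j. M $$ (Rm ns (Suc t) i, y))"
    proof (cases "j = t")
      case True
      have "(\<Sum>y\<in>colset t ?p j. Gm M ns t $$ (rho t ?p i, y))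
          = (\<Sum>y\<in>{t..<t+?p}. M $$ (Rm ns (Suc t) i, off ns t + (y - t)))"
      proof (rule sum.cong)
        fix y assume y: "y \<in> {t..<t+?p}"
        have "y < t + (sum_list ns - off ns t)" using y le by auto
        thus "Gm M ns t $$ (rho t ?p i, y) = M $$ (Rm ns (Suc t) i, off ns t + (y - t))"
          using ri y Ri by (auto simp: Gm_def Cm_def)
      qed (auto simp: colset_def True)
      also have "\<dots> = (\<Sum>y\<in>blk ns t. M $$ (Rm ns (Suc t) i, y))"
        unfolding blk_def by (rule sum_shift_ivl)
      finally show ?thesis using True by (simp add: Cm_def)
    next
      case False
      have rj: "rho t ?p j < t + (sum_list ns - off ns t)" using j le pos oS by (auto simp: rho_def)
      have Cj: "Cm ns t (rho t ?p j) = Cm ns (Suc t) j"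
        using False j le pos oS by (auto simp: rho_def Cm_def)
      show ?thesis using False ri rj Ri Cj by (simp add: colset_def Gm_def)
    qed
    also have "\<dots> = Gm M ns (Suc t) $$ (i,j)" using i j by (simp add: Gm_def)
    finally show "collapse (Gm M ns t) (t + (sum_list ns - off ns t)) t ?p $$ (i,j) = Gm M ns (Suc t) $$ (i,j)" .
  qed
  show "redblk (Gm M ns t) t ?p = redblk M (off ns t) ?p"
  proof (rule eq_matI)
    fix i j assume "i < dim_row (redblk M (off ns t) ?p)" "j < dim_col (redblk M (off ns t) ?p)"
    hence i: "i < ?p - 1" and j: "j < ?p - 1" by (auto simp: redblk_def)
    have a: "t + 1 + i < t + (sum_list ns - off ns t)" "t + 1 + j < t + (sum_list ns - off ns t)" "t < t + (sum_list ns - off ns t)"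
      using i j le by auto
    show "redblk (Gm M ns t) t ?p $$ (i,j) = redblk M (off ns t) ?p $$ (i,j)"
      using i j a by (simp add: redblk_def Gm_def Cm_def Rm_def)
  qed (auto simp: redblk_def)
qed

lemma char_poly_blocks: fixes M :: "'a :: idom mat"
  assumes M: "M \<in> carrier_mat (sum_list ns) (sum_list ns)" and pos: "\<And>i. i < length ns \<Longrightarrow> ns ! i \<ge> 1"
  and H1: "\<And>i x y. i < length ns \<Longrightarrow> x \<in> blk ns i \<Longrightarrow> y < sum_list ns \<Longrightarrow> y \<notin> blk ns i \<Longrightarrow> M $$ (x,y) = M $$ (off ns i, y)"
  and H2: "\<And>i x. i < length ns \<Longrightarrow> x \<in> blk ns i \<Longrightarrow> (\<Sum>y\<in>blk ns i. M $$ (x,y)) = (\<Sum>y\<in>blk ns i. M $$ (off ns i, y))"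
  shows "char_poly M = char_poly (quot M ns) * (\<Prod>i<length ns. char_poly (redblk M (off ns i) (ns ! i)))"
proof -
  let ?N = "sum_list ns"
  have "t \<le> length ns \<Longrightarrow> char_poly M = char_poly (Gm M ns t) * (\<Prod>i<t. char_poly (redblk M (off ns i) (ns ! i)))" for t
  proof (induction t)
    case 0 thus ?case using Gm_0[OF M] by simp
  next
    case (Suc t)
    hence t: "t < length ns" by simp
    let ?p = "ns ! t"
    let ?d = "t + (?N - off ns t)"
    have oS: "off ns (Suc t) = off ns t + ?p" using off_Suc[OF t] .
    have le: "off ns t + ?p \<le> ?N" using off_le[of ns "Suc t"] oS by simp
    have p1: "1 \<le> ?p" using pos[OF t] .
    have G: "Gm M ns t \<in> carrier_mat ?d ?d" by (simp add: Gm_def)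
    have "char_poly (Gm M ns t) = char_poly (collapse (Gm M ns t) ?d t ?p) * char_poly (redblk (Gm M ns t) t ?p)"
    proof (rule char_poly_collapse[OF G])
      show "t + ?p \<le> ?d" using le by simp
      show "1 \<le> ?p" by fact
    next
      fix x j assume x: "t \<le> x" "x < t + ?p" and j: "j < ?d" "j < t \<or> t + ?p \<le> j"
      have xb: "off ns t + (x - t) \<in> blk ns t" using x by (auto simp: blk_def)
      have R: "Rm ns t x = off ns t + (x - t)" "Rm ns t t = off ns t" using x by (auto simp: Rm_def)
      have x': "x < ?d" "t < ?d" using x le by auto
      have C: "\<And>y. y \<in> Cm ns t j \<Longrightarrow> y < ?N \<and> y \<notin> blk ns t"
      proof -
        fix y assume y: "y \<in> Cm ns t j"
        show "y < ?N \<and> y \<notin> blk ns t"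
        proof (cases "j < t")
          case True
          hence "y \<in> blk ns j" using y by (simp add: Cm_def)
          thus ?thesis using blk_disj[OF True t] blk_le[of j ns y] True t by auto
        next
          case False
          thus ?thesis using y j le by (auto simp: Cm_def blk_def)
        qed
      qed
      have "Gm M ns t $$ (x,j) = (\<Sum>y\<in>Cm ns t j. M $$ (off ns t + (x - t), y))"
        using x' j R by (simp add: Gm_def)
      also have "\<dots> = (\<Sum>y\<in>Cm ns t j. M $$ (off ns t, y))"
        by (rule sum.cong[OF refl], rule H1[OF t xb], insert C, auto)
      also have "\<dots> = Gm M ns t $$ (t,j)" using x' j R by (simp add: Gm_def)
      finally show "Gm M ns t $$ (x,j) = Gm M ns t $$ (t,j)" .
    next
      fix x assume x: "t \<le> x" "x < t + ?p"
      have xb: "off ns t + (x - t) \<in> blk ns t" using x by (auto simp: blk_def)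
      have gen: "(\<Sum>y\<in>{t..<t+?p}. Gm M ns t $$ (z,y)) = (\<Sum>y\<in>blk ns t. M $$ (off ns t + (z - t), y))"
        if z: "t \<le> z" "z < t + ?p" for z
      proof -
        have "(\<Sum>y\<in>{t..<t+?p}. Gm M ns t $$ (z,y)) = (\<Sum>y\<in>{t..<t+?p}. M $$ (off ns t + (z - t), off ns t + (y - t)))"
          by (rule sum.cong, insert z le, auto simp: Gm_def Rm_def Cm_def)
        also have "\<dots> = (\<Sum>y\<in>blk ns t. M $$ (off ns t + (z - t), y))"
          unfolding blk_def by (rule sum_shift_ivl)
        finally show ?thesis .
      qed
      show "(\<Sum>y\<in>{t..<t+?p}. Gm M ns t $$ (x,y)) = (\<Sum>y\<in>{t..<t+?p}. Gm M ns t $$ (t,y))"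
      proof -
        have g2: "(\<Sum>y\<in>{t..<t+?p}. Gm M ns t $$ (t,y)) = (\<Sum>y\<in>blk ns t. M $$ (off ns t, y))"
          using gen[of t] p1 by simp
        show ?thesis unfolding gen[OF x] g2 using H2[OF t xb] .
      qed
    qed
    also have "\<dots> = char_poly (Gm M ns (Suc t)) * char_poly (redblk M (off ns t) ?p)"
      unfolding Gm_step[OF t p1] ..
    finally show ?case using Suc by (simp add: mult.assoc)
  qed
  from this[OF le_refl] show ?thesis unfolding Gm_last .
qed

lemma char_poly_single: assumes "A \<in> carrier_mat 1 1"
  shows "char_poly A = [:- (A $$ (0,0)), 1:]"
  unfolding char_poly_defs using assms by (simp add: det_single)

lemma char_poly_rowsum: fixes B :: "'a :: idom mat"
  assumes B: "B \<in> carrier_mat p p" and p: "1 \<le> p"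
  and rs: "\<And>x. x < p \<Longrightarrow> (\<Sum>y<p. B $$ (x,y)) = c"
  shows "char_poly B = [:-c, 1:] * char_poly (redblk B 0 p)"
proof -
  have "char_poly B = char_poly (collapse B p 0 p) * char_poly (redblk B 0 p)"
  proof (rule char_poly_collapse[OF B])
    fix x assume "0 \<le> x" "x < 0 + p"
    thus "(\<Sum>y\<in>{0..<0+p}. B $$ (x,y)) = (\<Sum>y\<in>{0..<0+p}. B $$ (0,y))"
      using rs[of x] rs[of 0] p by (simp add: lessThan_atLeast0)
  qed (insert p, auto)
  also have "char_poly (collapse B p 0 p) = [:-c, 1:]"
    by (subst char_poly_single, insert p rs[of 0], auto simp: collapse_def rho_def colset_def lessThan_atLeast0)
  finally show ?thesis .
qed

lemma quot_root: fixes M :: "'a :: field mat"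
  assumes M: "M \<in> carrier_mat (sum_list ns) (sum_list ns)" and k: "length ns > 0"
  and pos: "\<And>i. i < length ns \<Longrightarrow> ns ! i \<ge> 1"
  and rs: "\<And>x. x < sum_list ns \<Longrightarrow> (\<Sum>y<sum_list ns. M $$ (x,y)) = q"
  shows "poly (char_poly (quot M ns)) q = 0"
proof -
  let ?k = "length ns"
  have Q: "quot M ns \<in> carrier_mat ?k ?k" by (simp add: quot_def)
  define v :: "'a vec" where "v = vec ?k (\<lambda>_. 1)"
  have "eigenvector (quot M ns) v q" unfolding eigenvector_def
  proof (intro conjI)
    show "v \<in> carrier_vec (dim_row (quot M ns))" by (simp add: v_def quot_def)
    show "v \<noteq> 0\<^sub>v (dim_row (quot M ns))"
    proof
      assume "v = 0\<^sub>v (dim_row (quot M ns))"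
      hence "v $ 0 = 0\<^sub>v ?k $ 0" by (simp add: quot_def)
      thus False using k by (simp add: v_def)
    qed
    show "quot M ns *\<^sub>v v = q \<cdot>\<^sub>v v"
    proof (rule eq_vecI)
      fix i assume "i < dim_vec (q \<cdot>\<^sub>v v)"
      hence i: "i < ?k" by (simp add: v_def)
      have oi: "off ns i < sum_list ns" using blk_le[OF i, of "off ns i"] pos[OF i]
        by (simp add: blk_def)
      have "(quot M ns *\<^sub>v v) $ i = (\<Sum>j<?k. \<Sum>y\<in>blk ns j. M $$ (off ns i, y))"
        using i by (simp add: quot_def v_def scalar_prod_def lessThan_atLeast0)
      also have "\<dots> = (\<Sum>y<off ns ?k. M $$ (off ns i, y))" by (rule sum_blocks, simp)
      also have "\<dots> = q" unfolding off_length by (rule rs[OF oi])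
      finally show "(quot M ns *\<^sub>v v) $ i = (q \<cdot>\<^sub>v v) $ i" using i by (simp add: v_def)
    qed (simp add: v_def quot_def)
  qed
  hence "eigenvalue (quot M ns) q" unfolding eigenvalue_def by blast
  thus ?thesis using eigenvalue_root_char_poly[OF Q] by simp
qed

interpretation ofrp: map_poly_comm_ring_hom "of_real :: real \<Rightarrow> complex" ..

definition Pm :: "complex multiset \<Rightarrow> complex poly" where
  "Pm S = prod_mset (image_mset (\<lambda>a. [:-a, 1:]) S)"

lemma Pm_add: "Pm (S + T) = Pm S * Pm T" unfolding Pm_def by simp

lemma Pm_nz: "Pm S \<noteq> 0" unfolding Pm_def by (auto simp: prod_mset_zero_iff)

lemma order_Pm: "order a (Pm S) = count S a"
proof (induction S)
  case empty thus ?case by (simp add: Pm_def order_0I)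
next
  case (add x S)
  have "Pm (add_mset x S) = [:-x, 1:] * Pm S" by (simp add: Pm_def)
  also have "order a \<dots> = order a [:-x,1:] + order a (Pm S)"
    by (rule order_mult, metis Pm_nz mult_eq_0_iff pCons_eq_0_iff one_neq_zero)
  finally show ?case using add order_linear'[of a "-x"] by auto
qed

lemma Pm_inj: "Pm S = Pm T \<Longrightarrow> S = T"
  by (rule multiset_eqI, metis order_Pm)

lemma spec_eq: assumes A: "A \<in> carrier_mat n n" and "char_poly (map_mat complex_of_real A) = Pm S"
  shows "spec A = S"
  unfolding spec_def using assms(2) by (intro the_equality, auto simp: Pm_def[symmetric] intro: Pm_inj)

lemma spec_ex: assumes A: "A \<in> carrier_mat n n"
  shows "char_poly (map_mat complex_of_real A) = Pm (spec A)"
proof -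
  have "map_mat complex_of_real A \<in> carrier_mat n n" using A by simp
  from char_poly_factorized[OF this] obtain as where
    as: "char_poly (map_mat complex_of_real A) = (\<Prod>a\<leftarrow>as. [:- a, 1:])" by blast
  have "(\<Prod>a\<leftarrow>as. [:- a, 1:]) = Pm (mset as)" unfolding Pm_def by (induction as, auto)
  with as have "spec A = mset as" using spec_eq[OF A] by simp
  with as show ?thesis using \<open>(\<Prod>a\<leftarrow>as. [:- a, 1:]) = Pm (mset as)\<close> by simp
qed

lemma cp_complex: "A \<in> carrier_mat n n \<Longrightarrow> char_poly (map_mat complex_of_real A) = map_poly complex_of_real (char_poly A)"
  using of_real_hom.char_poly_hom by auto

lemma spec_mult: assumes A: "A \<in> carrier_mat n n" and B: "B \<in> carrier_mat m m"
  and C: "\<And>i. i \<in> I \<Longrightarrow> C i \<in> carrier_mat (d i) (d i)" and fin: "finite I"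
  and cp: "char_poly A = char_poly B * (\<Prod>i\<in>I. char_poly (C i))"
  shows "spec A = spec B + (\<Sum>i\<in>I. spec (C i))"
proof (rule spec_eq[OF A])
  have "char_poly (map_mat complex_of_real A) = map_poly complex_of_real (char_poly B) * (\<Prod>i\<in>I. map_poly complex_of_real (char_poly (C i)))"
    unfolding cp_complex[OF A] cp by (simp add: ofrp.hom_mult ofrp.hom_prod)
  also have "\<dots> = Pm (spec B) * (\<Prod>i\<in>I. Pm (spec (C i)))"
    using spec_ex[OF B] spec_ex[OF C] cp_complex[OF B] cp_complex[OF C] by simp
  also have "(\<Prod>i\<in>I. Pm (spec (C i))) = Pm (\<Sum>i\<in>I. spec (C i))"
    using fin by (induction I rule: finite_induct, auto simp: Pm_add, simp add: Pm_def)
  finally show "char_poly (map_mat complex_of_real A) = Pm (spec B + (\<Sum>i\<in>I. spec (C i)))"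
    by (simp add: Pm_add)
qed

lemma spec_similar: assumes A: "A \<in> carrier_mat n n" and B: "B \<in> carrier_mat n n" and "similar_mat A B"
  shows "spec A = spec B"
proof (rule spec_eq[OF A])
  show "char_poly (map_mat complex_of_real A) = Pm (spec B)"
    using char_poly_similar[OF assms(3)] spec_ex[OF B] cp_complex[OF A] cp_complex[OF B] by simp
qed

lemma spec_linear: assumes B: "B \<in> carrier_mat n n" and B': "B' \<in> carrier_mat m m"
  and cp: "char_poly B = [:-c, 1:] * char_poly B'"
  shows "spec B = add_mset (complex_of_real c) (spec B')"
proof (rule spec_eq[OF B])
  show "char_poly (map_mat complex_of_real B) = Pm (add_mset (complex_of_real c) (spec B'))"
    unfolding cp_complex[OF B] cp ofrp.hom_mult spec_ex[OF B', unfolded cp_complex[OF B']]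
    by (simp add: Pm_def)
qed

lemma spec_empty: "A \<in> carrier_mat 0 0 \<Longrightarrow> spec A = {#}"
  by (rule spec_eq, assumption, simp add: char_poly_defs Pm_def)

lemma spec_root: assumes A: "A \<in> carrier_mat n n" and r: "poly (char_poly A) q = 0"
  shows "complex_of_real q \<in># spec A"
proof -
  have "poly (Pm (spec A)) (complex_of_real q) = 0"
    unfolding spec_ex[OF A, symmetric] cp_complex[OF A] using r by simp
  thus ?thesis unfolding Pm_def poly_prod_mset by (auto simp: prod_mset_zero_iff)
qed

lemma spec_shift: assumes A: "A \<in> carrier_mat n n"
  shows "spec (A + d \<cdot>\<^sub>m 1\<^sub>m n) = image_mset (\<lambda>x. x + complex_of_real d) (spec A)"
proof (rule spec_eq)
  show AD: "A + d \<cdot>\<^sub>m 1\<^sub>m n \<in> carrier_mat n n" using A by simp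
  let ?A = "map_mat complex_of_real A"
  let ?D = "map_mat complex_of_real (A + d \<cdot>\<^sub>m 1\<^sub>m n)"
  have A': "?A \<in> carrier_mat n n" using A by simp
  have D': "?D \<in> carrier_mat n n" using A by simp
  have "poly (char_poly ?D) k = poly (Pm (image_mset (\<lambda>x. x + complex_of_real d) (spec A))) k" for k
  proof -
    have "char_matrix ?D k = char_matrix ?A (k - complex_of_real d)"
      by (rule eq_matI, insert A, auto simp: char_matrix_def)
    hence "poly (char_poly ?D) k = poly (char_poly ?A) (k - complex_of_real d)"
      unfolding char_poly_matrix[OF D'] char_poly_matrix[OF A'] by simp
    also have "\<dots> = poly (Pm (spec A)) (k - complex_of_real d)" using spec_ex[OF A] by simp
    also have "\<dots> = poly (Pm (image_mset (\<lambda>x. x + complex_of_real d) (spec A))) k"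
      unfolding Pm_def poly_prod_mset by (simp add: multiset.map_comp o_def algebra_simps)
    finally show ?thesis .
  qed
  thus "char_poly ?D = Pm (image_mset (\<lambda>x. x + complex_of_real d) (spec A))"
    by (intro poly_ext, auto)
qed

lemma adj_sym: "adj E x y = adj E y x" unfolding adj_def by (auto simp: insert_commute)

lemma wf_leaves_ne: "wf_stree t \<Longrightarrow> leaves t \<noteq> []"
proof (induction t)
  case (Leaf x) thus ?case by simp
next
  case (Node E ts)
  then obtain t where "t \<in> set ts" using Node.prems by (cases ts, auto)
  with Node show ?case by auto
qed

lemma compose_sub: "e \<in> compose t \<Longrightarrow> e \<subseteq> set (leaves t)"
proof (induction t arbitrary: e)
  case (Leaf x) thus ?case by simp
next
  case (Node E ts)
  from Node.prems show ?case
  proof (auto, goal_cases)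
    case (1 x t) thus ?case using Node.IH[of t e] by auto
  next
    case (2 x y i j) thus ?case by (metis nth_mem)
  next
    case (3 x y i j) thus ?case by (metis nth_mem)
  qed
qed

lemma distinct_concat_nth: "distinct (concat xss) \<Longrightarrow> i < length xss \<Longrightarrow> j < length xss \<Longrightarrow> i \<noteq> j
  \<Longrightarrow> set (xss ! i) \<inter> set (xss ! j) = {}"
proof (induction xss arbitrary: i j)
  case Nil thus ?case by simp
next
  case (Cons xs xss)
  show ?case
  proof (cases i)
    case 0
    then obtain j' where j: "j = Suc j'" using Cons by (cases j, auto)
    have "xss ! j' \<in> set xss" using Cons(4) j by simp
    hence "set (xss ! j') \<subseteq> set (concat xss)" by auto
    moreover have "set xs \<inter> set (concat xss) = {}" using Cons(2) by simp
    ultimately show ?thesis using 0 j by auto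
  next
    case (Suc i')
    show ?thesis
    proof (cases j)
      case 0
      have "xss ! i' \<in> set xss" using Cons(3) Suc by simp
      hence "set (xss ! i') \<subseteq> set (concat xss)" by auto
      moreover have "set xs \<inter> set (concat xss) = {}" using Cons(2) by simp
      ultimately show ?thesis using 0 Suc by auto
    next
      case (Suc j') thus ?thesis using Cons \<open>i = Suc i'\<close> by auto
    qed
  qed
qed

lemma distinct_concat_nth2: "distinct (concat xss) \<Longrightarrow> i < length xss \<Longrightarrow> distinct (xss ! i)"
  by (metis distinct_concat_iff nth_mem)

lemma nth_concat_off: "i < length xss \<Longrightarrow> a < length (xss ! i) \<Longrightarrow>
  concat xss ! (off (map length xss) i + a) = xss ! i ! a"
proof (induction xss arbitrary: i)
  case Nil thus ?case by simp
next
  case (Cons xs xss)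
  show ?case
  proof (cases i)
    case 0 thus ?thesis using Cons by (simp add: off_def nth_append)
  next
    case (Suc i')
    have "off (map length (xs # xss)) i = length xs + off (map length xss) i'"
      unfolding Suc off_def by simp
    thus ?thesis using Cons Suc by (simp add: nth_append)
  qed
qed

lemma sum_list_map_length: "sum_list (map length xss) = length (concat xss)"
  by (simp add: length_concat)

context
  fixes E :: "nat set set" and ts :: "stree list"
  assumes wf: "wf_stree (Node E ts)" and dist: "distinct (leaves (Node E ts))"
begin

abbreviation "V i \<equiv> set (leaves (ts ! i))"
abbreviation "k \<equiv> length ts"

lemma E_sub: "{a, b} \<in> E \<Longrightarrow> a \<noteq> b \<and> a < k \<and> b < k"
proof -
  assume ab: "{a,b} \<in> E"
  with wf obtain i j where "{a,b} = {i,j}" "i < k" "j < k" "i \<noteq> j" by auto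
  thus ?thesis by (metis doubleton_eq_iff)
qed

lemma V_disj: "i < k \<Longrightarrow> j < k \<Longrightarrow> i \<noteq> j \<Longrightarrow> V i \<inter> V j = {}"
  using distinct_concat_nth[of "map leaves ts" i j] dist by auto

lemma V_dist: "i < k \<Longrightarrow> distinct (leaves (ts ! i))"
  using distinct_concat_nth2[of "map leaves ts" i] dist by auto

lemma leaves_set: "set (leaves (Node E ts)) = (\<Union>i<k. V i)"
proof -
  have "set ts = (\<lambda>i. ts ! i) ` {..<k}" by (auto simp: in_set_conv_nth)
  thus ?thesis by simp
qed

lemma child_in: "i < k \<Longrightarrow> e \<in> compose (ts ! i) \<Longrightarrow> e \<subseteq> V i"
  using compose_sub by auto

lemma adj_compose_iff: "adj (compose (Node E ts)) u v \<longleftrightarrow> u \<noteq> v \<and>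
   ((\<exists>l<k. {u,v} \<in> compose (ts ! l)) \<or>
    (\<exists>a b. {a,b} \<in> E \<and> a < k \<and> b < k \<and> u \<in> V a \<and> v \<in> V b))"
proof -
  have 1: "{u,v} \<in> (\<Union>t\<in>set ts. compose t) \<longleftrightarrow> (\<exists>l<k. {u,v} \<in> compose (ts ! l))"
  proof
    assume "{u,v} \<in> (\<Union>t\<in>set ts. compose t)"
    then obtain t where t: "t \<in> set ts" "{u,v} \<in> compose t" by blast
    then obtain l where "l < k" "ts ! l = t" by (auto simp: in_set_conv_nth)
    thus "\<exists>l<k. {u,v} \<in> compose (ts ! l)" using t by blast
  next
    assume "\<exists>l<k. {u,v} \<in> compose (ts ! l)"
    then obtain l where "l < k" "{u,v} \<in> compose (ts ! l)" by blast
    thus "{u,v} \<in> (\<Union>t\<in>set ts. compose t)" using nth_mem[of l ts] by blast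
  qed
  have 2: "{u,v} \<in> {{x, y} | x y i j. {i, j} \<in> E \<and> i < k \<and> j < k \<and> x \<in> V i \<and> y \<in> V j}
     \<longleftrightarrow> (\<exists>a b. {a,b} \<in> E \<and> a < k \<and> b < k \<and> u \<in> V a \<and> v \<in> V b)"
  proof
    assume "{u,v} \<in> {{x, y} | x y i j. {i, j} \<in> E \<and> i < k \<and> j < k \<and> x \<in> V i \<and> y \<in> V j}"
    then obtain x y i j where e: "{u,v} = {x,y}" and h: "{i, j} \<in> E" "i < k" "j < k" "x \<in> V i" "y \<in> V j"
      by blast
    from e have "(u = x \<and> v = y) \<or> (u = y \<and> v = x)" by (simp add: doubleton_eq_iff)
    thus "\<exists>a b. {a,b} \<in> E \<and> a < k \<and> b < k \<and> u \<in> V a \<and> v \<in> V b"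
    proof
      assume "u = x \<and> v = y" thus ?thesis using h by blast
    next
      assume "u = y \<and> v = x" thus ?thesis using h insert_commute[of i j "{}"] by metis
    qed
  next
    assume "\<exists>a b. {a,b} \<in> E \<and> a < k \<and> b < k \<and> u \<in> V a \<and> v \<in> V b"
    thus "{u,v} \<in> {{x, y} | x y i j. {i, j} \<in> E \<and> i < k \<and> j < k \<and> x \<in> V i \<and> y \<in> V j}"
      by blast
  qed
  have "adj (compose (Node E ts)) u v \<longleftrightarrow> u \<noteq> v \<and> ({u,v} \<in> (\<Union>t\<in>set ts. compose t) \<or>
     {u,v} \<in> {{x, y} | x y i j. {i, j} \<in> E \<and> i < k \<and> j < k \<and> x \<in> V i \<and> y \<in> V j})"
    unfolding adj_def compose.simps by blast
  thus ?thesis unfolding 1 2 .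
qed

lemma adj_in: assumes i: "i < k" and u: "u \<in> V i" and v: "v \<in> V i"
  shows "adj (compose (Node E ts)) u v \<longleftrightarrow> adj (compose (ts ! i)) u v"
proof -
  have 1: "l < k \<Longrightarrow> {u,v} \<in> compose (ts ! l) \<Longrightarrow> l = i" for l
    using child_in[of l "{u,v}"] V_disj[of i l] i u by auto
  have 2: "\<not> ({a,b} \<in> E \<and> a < k \<and> b < k \<and> u \<in> V a \<and> v \<in> V b)" for a b
  proof
    assume ab: "{a,b} \<in> E \<and> a < k \<and> b < k \<and> u \<in> V a \<and> v \<in> V b"
    hence "a \<noteq> b" using E_sub by auto
    hence "a \<noteq> i \<or> b \<noteq> i" by auto
    thus False using V_disj[of a i] V_disj[of b i] ab i u v by auto
  qed
  show ?thesis unfolding adj_compose_iff using 1 2 i by (auto simp: adj_def)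
qed

lemma adj_cross: assumes i: "i < k" and j: "j < k" and ij: "i \<noteq> j" and u: "u \<in> V i" and v: "v \<in> V j"
  shows "adj (compose (Node E ts)) u v \<longleftrightarrow> adj E i j"
proof -
  have uv: "u \<noteq> v" using V_disj[OF i j ij] u v by auto
  have 1: "\<not> (l < k \<and> {u,v} \<in> compose (ts ! l))" for l
    using child_in[of l "{u,v}"] V_disj[of i l] V_disj[of j l] i j ij u v by auto
  have 2: "({a,b} \<in> E \<and> a < k \<and> b < k \<and> u \<in> V a \<and> v \<in> V b) \<longleftrightarrow> (a = i \<and> b = j \<and> {i,j} \<in> E)" for a b
    using V_disj[of a i] V_disj[of b j] i j u v by auto
  show ?thesis unfolding adj_compose_iff using 1 2 uv ij by (auto simp: adj_def)
qed

lemma card_V: "i < k \<Longrightarrow> card (V i) = length (leaves (ts ! i))"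
  using V_dist distinct_card by blast

lemma deg_split: assumes i: "i < k" and u: "u \<in> V i"
  shows "deg (set (leaves (Node E ts))) (compose (Node E ts)) u = deg (V i) (compose (ts ! i)) u + Nblock E ts i"
proof -
  let ?J = "{s. s < k \<and> adj E s i}"
  have eq: "{v \<in> set (leaves (Node E ts)). adj (compose (Node E ts)) u v}
     = {v \<in> V i. adj (compose (ts ! i)) u v} \<union> (\<Union>j\<in>?J. V j)"
  proof (intro equalityI subsetI)
    fix v assume "v \<in> {v \<in> set (leaves (Node E ts)). adj (compose (Node E ts)) u v}"
    then obtain j where j: "j < k" "v \<in> V j" and a: "adj (compose (Node E ts)) u v"
      unfolding leaves_set by auto
    show "v \<in> {v \<in> V i. adj (compose (ts ! i)) u v} \<union> (\<Union>j\<in>?J. V j)"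
    proof (cases "j = i")
      case True thus ?thesis using adj_in[OF i u] j a by auto
    next
      case False thus ?thesis using adj_cross[OF i j(1) _ u j(2)] j a adj_sym[of E] by auto
    qed
  next
    fix v assume v: "v \<in> {v \<in> V i. adj (compose (ts ! i)) u v} \<union> (\<Union>j\<in>?J. V j)"
    show "v \<in> {v \<in> set (leaves (Node E ts)). adj (compose (Node E ts)) u v}"
    proof (cases "v \<in> V i")
      case True
      hence "v \<notin> (\<Union>j\<in>?J. V j)" using V_disj[of i] i by (auto simp: adj_def)
      thus ?thesis using v True adj_in[OF i u True] i unfolding leaves_set by auto
    next
      case False
      then obtain j where j: "j < k" "adj E j i" "v \<in> V j" using v by auto
      hence "j \<noteq> i" by (auto simp: adj_def)
      thus ?thesis using adj_cross[OF i j(1) _ u j(3)] j adj_sym[of E] unfolding leaves_set by auto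
    qed
  qed
  have fin: "finite ?J" by auto
  have disj: "{v \<in> V i. adj (compose (ts ! i)) u v} \<inter> (\<Union>j\<in>?J. V j) = {}"
    using V_disj[of i] i by (auto simp: adj_def)
  have "card (\<Union>j\<in>?J. V j) = (\<Sum>j\<in>?J. card (V j))"
    by (rule card_UN_disjoint, insert V_disj, auto)
  also have "\<dots> = Nblock E ts i" unfolding Nblock_def by (rule sum.cong, auto simp: card_V)
  finally have cU: "card (\<Union>j\<in>?J. V j) = Nblock E ts i" .
  show ?thesis unfolding deg_def eq
    by (subst card_Un_disjoint, insert disj cU, auto simp: deg_def)
qed

end

definition UL :: "real \<Rightarrow> real \<Rightarrow> real \<Rightarrow> real \<Rightarrow> stree \<Rightarrow> real mat" where
  "UL \<alpha> \<beta> \<gamma> \<delta> t = mat (length (leaves t)) (length (leaves t)) (\<lambda>(i,j).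
      \<alpha> * (if adj (compose t) (leaves t ! i) (leaves t ! j) then 1 else 0) + \<beta> * (if i = j then 1 else 0) + \<gamma>
      + \<delta> * (if i = j then real (deg (set (leaves t)) (compose t) (leaves t ! i)) else 0))"

lemma UL_carrier: "UL \<alpha> \<beta> \<gamma> \<delta> t \<in> carrier_mat (length (leaves t)) (length (leaves t))"
  by (simp add: UL_def)

lemma Umat_UL: "leaves T = [0..<n] \<Longrightarrow> Umat \<alpha> \<beta> \<gamma> \<delta> n (compose T) = UL \<alpha> \<beta> \<gamma> \<delta> T"
  by (rule eq_matI, auto simp: Umat_def UL_def)

lemma sum_indicator_card: "(\<Sum>b<(m::nat). if P b then 1 else 0) = real (card {b. b < m \<and> P b})"
proof -
  have "(\<Sum>b<m. if P b then 1 else (0::real)) = (\<Sum>b\<in>{..<m} \<inter> {b. P b}. 1)"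
    by (subst sum.If_cases, auto)
  also have "{..<m} \<inter> {b. P b} = {b. b < m \<and> P b}" by auto
  finally show ?thesis by simp
qed

lemma card_nth_filter: "distinct L \<Longrightarrow> card {b. b < length L \<and> P (L ! b)} = card {v \<in> set L. P v}"
proof -
  assume d: "distinct L"
  have "(\<lambda>b. L ! b) ` {b. b < length L \<and> P (L ! b)} = {v \<in> set L. P v}"
    by (auto simp: in_set_conv_nth)
  moreover have "inj_on (\<lambda>b. L ! b) {b. b < length L \<and> P (L ! b)}"
    using inj_on_nth[OF d, of "{b. b < length L \<and> P (L ! b)}"] by auto
  ultimately show ?thesis using card_image by metis
qed

lemma rowsum_UL: assumes d: "distinct (leaves t)" and a: "a < length (leaves t)"
  shows "(\<Sum>b<length (leaves t). UL \<alpha> \<beta> \<gamma> \<delta> t $$ (a,b)) =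
    \<alpha> * real (deg (set (leaves t)) (compose t) (leaves t ! a)) + \<beta> + \<gamma> * real (length (leaves t))
    + \<delta> * real (deg (set (leaves t)) (compose t) (leaves t ! a))"
proof -
  let ?L = "leaves t" let ?m = "length ?L" let ?E = "compose t"
  let ?d = "real (deg (set ?L) ?E (?L ! a))"
  have "(\<Sum>b<?m. UL \<alpha> \<beta> \<gamma> \<delta> t $$ (a,b)) = (\<Sum>b<?m.
      \<alpha> * (if adj ?E (?L ! a) (?L ! b) then 1 else 0) + (\<beta> * (if b = a then 1 else 0) + \<gamma>
      + \<delta> * (if b = a then ?d else 0)))"
    by (rule sum.cong, insert a, auto simp: UL_def)
  also have "\<dots> = \<alpha> * (\<Sum>b<?m. if adj ?E (?L ! a) (?L ! b) then 1 else 0) + (\<beta> + \<gamma> * ?m + \<delta> * ?d)"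
    using a by (simp add: sum.distrib sum_distrib_left[symmetric] if_distrib[of "\<lambda>x. \<beta> * x"] if_distrib[of "\<lambda>x. \<delta> * x"] cong: if_cong)
  also have "(\<Sum>b<?m. if adj ?E (?L ! a) (?L ! b) then 1 else 0) = ?d"
    unfolding sum_indicator_card card_nth_filter[OF d] deg_def ..
  finally show ?thesis by simp
qed

lemma diag_mult_left: assumes A: "A \<in> carrier_mat kk m" and i: "i < kk" and j: "j < m"
  shows "(mat kk kk (\<lambda>(i,j). if i = j then d i else 0) * A) $$ (i,j) = d i * A $$ (i,j)"
proof -
  have "(mat kk kk (\<lambda>(i,j). if i = j then d i else 0) * A) $$ (i,j) = (\<Sum>l = 0..<kk. (if i = l then d i else 0) * A $$ (l,j))"
    using A i j by (simp add: scalar_prod_def)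
  also have "\<dots> = (\<Sum>l = 0..<kk. if l = i then d i * A $$ (l,j) else 0)" by (rule sum.cong, auto)
  also have "\<dots> = d i * A $$ (i,j)" using i by simp
  finally show ?thesis .
qed

lemma diag_mult_right: assumes A: "A \<in> carrier_mat m kk" and i: "i < m" and j: "j < kk"
  shows "(A * mat kk kk (\<lambda>(i,j). if i = j then d i else 0)) $$ (i,j) = A $$ (i,j) * d j"
proof -
  have "(A * mat kk kk (\<lambda>(i,j). if i = j then d i else 0)) $$ (i,j) = (\<Sum>l = 0..<kk. A $$ (i,l) * (if l = j then d l else 0))"
    using A i j by (simp add: scalar_prod_def)
  also have "\<dots> = (\<Sum>l = 0..<kk. if l = j then A $$ (i,l) * d l else 0)" by (rule sum.cong, auto)
  also have "\<dots> = A $$ (i,j) * d j" using j by simp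
  finally show ?thesis .
qed

lemma reg_deg: "regular VV E \<Longrightarrow> u \<in> VV \<Longrightarrow> deg VV E u = reg VV E"
  unfolding regular_def reg_def by (metis someI)

lemma regular_leaf: "regular (set (leaves (Leaf x))) (compose (Leaf x))"
  unfolding regular_def deg_def adj_def by auto

context
  fixes E :: "nat set set" and ts :: "stree list"
  assumes wf: "wf_stree (Node E ts)" and dist: "distinct (leaves (Node E ts))"
begin

abbreviation "ns \<equiv> map (\<lambda>c. length (leaves c)) ts"
abbreviation "LL \<equiv> leaves (Node E ts)"

lemma ns_sum: "sum_list ns = length LL"
  by (simp add: length_concat o_def)

lemma ns_nth: "i < length ts \<Longrightarrow> ns ! i = length (leaves (ts ! i))" by simp

lemma ns_pos: "i < length ts \<Longrightarrow> ns ! i \<ge> 1"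
  using wf wf_leaves_ne[of "ts ! i"] by (auto simp: Suc_le_eq)

lemma L_off: "i < length ts \<Longrightarrow> a < ns ! i \<Longrightarrow> LL ! (off ns i + a) = leaves (ts ! i) ! a"
  using nth_concat_off[of i "map leaves ts" a] by (simp add: o_def)

lemma off_a_lt: "i < length ts \<Longrightarrow> a < ns ! i \<Longrightarrow> off ns i + a < length LL"
  using blk_le[of i ns "off ns i + a"] ns_sum by (simp add: blk_def)

lemma blk_iff: assumes x: "x < length LL" and i: "i < length ts"
  shows "x \<in> blk ns i \<longleftrightarrow> LL ! x \<in> set (leaves (ts ! i))"
proof
  assume "x \<in> blk ns i"
  then obtain a where a: "a < ns ! i" "x = off ns i + a" unfolding blk_def
    by (metis add_diff_inverse_nat atLeastLessThan_iff nat_add_left_cancel_less not_less)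
  thus "LL ! x \<in> set (leaves (ts ! i))" using L_off[OF i a(1)] i by simp
next
  assume "LL ! x \<in> set (leaves (ts ! i))"
  then obtain a where a: "a < ns ! i" "leaves (ts ! i) ! a = LL ! x" using i by (auto simp: in_set_conv_nth)
  have "LL ! (off ns i + a) = LL ! x" using L_off[OF i a(1)] a by simp
  hence "off ns i + a = x" using nth_eq_iff_index_eq[OF dist off_a_lt[OF i a(1)] x] by simp
  thus "x \<in> blk ns i" using a by (auto simp: blk_def)
qed

lemma some_blk: "x < length LL \<Longrightarrow> \<exists>i<length ts. LL ! x \<in> set (leaves (ts ! i))"
  using nth_mem[of x LL] leaves_set[OF wf dist] by auto

lemma entry_cross: assumes x: "x < length LL" and y: "y < length LL" and i: "i < length ts" and j: "j < length ts" and ij: "i \<noteq> j"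
  and xi: "LL ! x \<in> set (leaves (ts ! i))" and yj: "LL ! y \<in> set (leaves (ts ! j))"
  shows "UL \<alpha> \<beta> \<gamma> \<delta> (Node E ts) $$ (x,y) = \<alpha> * (if adj E i j then 1 else 0) + \<gamma>"
proof -
  have "x \<noteq> y" using V_disj[OF wf dist i j ij] xi yj by auto
  thus ?thesis using x y adj_cross[OF wf dist i j ij xi yj] by (simp add: UL_def)
qed

definition Bk :: "real \<Rightarrow> real \<Rightarrow> real \<Rightarrow> real \<Rightarrow> nat \<Rightarrow> real mat" where
  "Bk \<alpha> \<beta> \<gamma> \<delta> i = mat (ns ! i) (ns ! i) (\<lambda>(a,b). UL \<alpha> \<beta> \<gamma> \<delta> (Node E ts) $$ (off ns i + a, off ns i + b))"

lemma Bk_eq: assumes i: "i < length ts"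
  shows "Bk \<alpha> \<beta> \<gamma> \<delta> i = UL \<alpha> \<beta> \<gamma> \<delta> (ts ! i) + (\<delta> * real (Nblock E ts i)) \<cdot>\<^sub>m 1\<^sub>m (ns ! i)"
proof (rule eq_matI)
  fix a b assume "a < dim_row (UL \<alpha> \<beta> \<gamma> \<delta> (ts ! i) + (\<delta> * real (Nblock E ts i)) \<cdot>\<^sub>m 1\<^sub>m (ns ! i))"
    "b < dim_col (UL \<alpha> \<beta> \<gamma> \<delta> (ts ! i) + (\<delta> * real (Nblock E ts i)) \<cdot>\<^sub>m 1\<^sub>m (ns ! i))"
  hence a: "a < ns ! i" and b: "b < ns ! i" using i by (auto simp: UL_def)
  have ua: "leaves (ts ! i) ! a \<in> set (leaves (ts ! i))" "leaves (ts ! i) ! b \<in> set (leaves (ts ! i))" using a b i by auto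
  show "Bk \<alpha> \<beta> \<gamma> \<delta> i $$ (a,b) = (UL \<alpha> \<beta> \<gamma> \<delta> (ts ! i) + (\<delta> * real (Nblock E ts i)) \<cdot>\<^sub>m 1\<^sub>m (ns ! i)) $$ (a,b)"
    using a b i off_a_lt[OF i a] off_a_lt[OF i b] L_off[OF i a] L_off[OF i b]
      adj_in[OF wf dist i ua] deg_split[OF wf dist i ua(1)]
    by (cases "a = b", simp_all add: Bk_def UL_def algebra_simps)
qed (insert i, auto simp: Bk_def UL_def)

lemma Bk_carrier: "Bk \<alpha> \<beta> \<gamma> \<delta> i \<in> carrier_mat (ns ! i) (ns ! i)" by (simp add: Bk_def)

definition cval :: "real \<Rightarrow> real \<Rightarrow> real \<Rightarrow> real \<Rightarrow> nat \<Rightarrow> real" where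
  "cval \<alpha> \<beta> \<gamma> \<delta> i = (let \<rho> = real (reg (set (leaves (ts ! i))) (compose (ts ! i))) in
     \<alpha> * \<rho> + \<beta> + \<gamma> * real (ns ! i) + \<delta> * (\<rho> + real (Nblock E ts i)))"

lemma Bk_rowsum: assumes i: "i < length ts" and r: "regular (set (leaves (ts ! i))) (compose (ts ! i))" and a: "a < ns ! i"
  shows "(\<Sum>b<ns ! i. Bk \<alpha> \<beta> \<gamma> \<delta> i $$ (a,b)) = cval \<alpha> \<beta> \<gamma> \<delta> i"
proof -
  have a': "a < length (leaves (ts ! i))" using a i by simp
  have "(\<Sum>b<ns ! i. Bk \<alpha> \<beta> \<gamma> \<delta> i $$ (a,b)) = (\<Sum>b<ns ! i. UL \<alpha> \<beta> \<gamma> \<delta> (ts ! i) $$ (a,b) + (if a = b then \<delta> * real (Nblock E ts i) else 0))"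
    unfolding Bk_eq[OF i] by (rule sum.cong, insert a i, auto simp: UL_def)
  also have "\<dots> = (\<Sum>b<ns ! i. UL \<alpha> \<beta> \<gamma> \<delta> (ts ! i) $$ (a,b)) + \<delta> * real (Nblock E ts i)"
    using a by (simp add: sum.distrib)
  also have "(\<Sum>b<ns ! i. UL \<alpha> \<beta> \<gamma> \<delta> (ts ! i) $$ (a,b)) = (\<Sum>b<length (leaves (ts ! i)). UL \<alpha> \<beta> \<gamma> \<delta> (ts ! i) $$ (a,b))"
    using i by simp
  also have "\<dots> = \<alpha> * real (reg (set (leaves (ts ! i))) (compose (ts ! i))) + \<beta> + \<gamma> * real (length (leaves (ts ! i)))
    + \<delta> * real (reg (set (leaves (ts ! i))) (compose (ts ! i)))"
    unfolding rowsum_UL[OF V_dist[OF wf dist i] a'] reg_deg[OF r nth_mem[OF a']] ..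
  finally show ?thesis using i by (simp add: cval_def Let_def algebra_simps)
qed

lemma blk_sum: "(\<Sum>y\<in>blk ns i. f y) = (\<Sum>b<ns ! i. f (off ns i + b))"
  using sum_shift_ivl[where a=0 and b="off ns i" and p="ns ! i" and f=f] unfolding blk_def
  by (simp add: lessThan_atLeast0)

lemma redblk_Bk: "i < length ts \<Longrightarrow> redblk (UL \<alpha> \<beta> \<gamma> \<delta> (Node E ts)) (off ns i) (ns ! i) = redblk (Bk \<alpha> \<beta> \<gamma> \<delta> i) 0 (ns ! i)"
proof (rule eq_matI)
  fix a b assume i: "i < length ts" and ab: "a < dim_row (redblk (Bk \<alpha> \<beta> \<gamma> \<delta> i) 0 (ns ! i))" "b < dim_col (redblk (Bk \<alpha> \<beta> \<gamma> \<delta> i) 0 (ns ! i))"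
  hence a: "1 + a < ns ! i" "1 + b < ns ! i" "0 < ns ! i" by (auto simp: redblk_def)
  show "redblk (UL \<alpha> \<beta> \<gamma> \<delta> (Node E ts)) (off ns i) (ns ! i) $$ (a, b) = redblk (Bk \<alpha> \<beta> \<gamma> \<delta> i) 0 (ns ! i) $$ (a, b)"
    using ab a unfolding redblk_def Bk_def by (simp add: add.assoc)
qed (auto simp: redblk_def)

end

context
  fixes E :: "nat set set" and ts :: "stree list"
  assumes wf: "wf_stree (Node E ts)" and dist: "distinct (leaves (Node E ts))"
  and regc: "\<And>i. i < length ts \<Longrightarrow> regular (set (leaves (ts ! i))) (compose (ts ! i))"
begin

abbreviation "nz \<equiv> map (\<lambda>c. length (leaves c)) ts"

lemma blk_ex: "x \<in> blk nz i \<Longrightarrow> \<exists>a < nz ! i. x = off nz i + a"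
  unfolding blk_def by (rule exI[of _ "x - off nz i"], auto)

lemma off_in_blk: "i < length ts \<Longrightarrow> off nz i \<in> blk nz i"
  using ns_pos[OF wf dist, of i] by (auto simp: blk_def)

lemma Bk_index: "a < nz ! i \<Longrightarrow> b < nz ! i \<Longrightarrow>
  Bk E ts \<alpha> \<beta> \<gamma> \<delta> i $$ (a,b) = UL \<alpha> \<beta> \<gamma> \<delta> (Node E ts) $$ (off nz i + a, off nz i + b)"
  unfolding Bk_def[OF wf dist] by (simp del: nth_map)

lemma M_carrier: "UL \<alpha> \<beta> \<gamma> \<delta> (Node E ts) \<in> carrier_mat (sum_list nz) (sum_list nz)"
  unfolding ns_sum[OF wf dist] by (rule UL_carrier)

lemma blk_rowsum: assumes i: "i < length ts" and x: "x \<in> blk nz i"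
  shows "(\<Sum>y\<in>blk nz i. UL \<alpha> \<beta> \<gamma> \<delta> (Node E ts) $$ (x,y)) = cval E ts \<alpha> \<beta> \<gamma> \<delta> i"
proof -
  obtain a where a: "a < nz ! i" "x = off nz i + a" using blk_ex[OF x] by blast
  have "(\<Sum>y\<in>blk nz i. UL \<alpha> \<beta> \<gamma> \<delta> (Node E ts) $$ (x,y)) = (\<Sum>b<nz ! i. UL \<alpha> \<beta> \<gamma> \<delta> (Node E ts) $$ (x, off nz i + b))"
    by (rule blk_sum[OF wf dist])
  also have "\<dots> = (\<Sum>b<nz ! i. Bk E ts \<alpha> \<beta> \<gamma> \<delta> i $$ (a,b))"
    by (rule sum.cong[OF refl], insert a, simp add: Bk_index del: nth_map)
  also have "\<dots> = cval E ts \<alpha> \<beta> \<gamma> \<delta> i" by (rule Bk_rowsum[OF wf dist i regc[OF i] a(1)])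
  finally show ?thesis .
qed

lemma cp_UL: "char_poly (UL \<alpha> \<beta> \<gamma> \<delta> (Node E ts)) = char_poly (quot (UL \<alpha> \<beta> \<gamma> \<delta> (Node E ts)) nz)
   * (\<Prod>i<length ts. char_poly (redblk (Bk E ts \<alpha> \<beta> \<gamma> \<delta> i) 0 (nz ! i)))"
proof -
  let ?M = "UL \<alpha> \<beta> \<gamma> \<delta> (Node E ts)"
  have "char_poly ?M = char_poly (quot ?M nz) * (\<Prod>i<length nz. char_poly (redblk ?M (off nz i) (nz ! i)))"
  proof (rule char_poly_blocks[OF M_carrier])
    show "\<And>i. i < length nz \<Longrightarrow> 1 \<le> nz ! i" using ns_pos[OF wf dist] by simp
  next
    fix i x y assume i': "i < length nz" and x: "x \<in> blk nz i" and y: "y < sum_list nz" and yn: "y \<notin> blk nz i"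
    have i: "i < length ts" using i' by simp
    have N: "sum_list nz = length (leaves (Node E ts))" by (rule ns_sum[OF wf dist])
    have xl: "x < length (leaves (Node E ts))" using blk_le[OF i' x] N by simp
    have ol: "off nz i < length (leaves (Node E ts))" using blk_le[OF i' off_in_blk[OF i]] N by simp
    have yl: "y < length (leaves (Node E ts))" using y N by simp
    obtain j where j: "j < length ts" "leaves (Node E ts) ! y \<in> set (leaves (ts ! j))" using some_blk[OF wf dist yl] by blast
    have ji: "j \<noteq> i" using blk_iff[OF wf dist yl i] yn j by auto
    have xi: "leaves (Node E ts) ! x \<in> set (leaves (ts ! i))" using blk_iff[OF wf dist xl i] x by simp
    have oi: "leaves (Node E ts) ! off nz i \<in> set (leaves (ts ! i))" using blk_iff[OF wf dist ol i] off_in_blk[OF i] by simp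
    show "?M $$ (x,y) = ?M $$ (off nz i, y)"
      using entry_cross[OF wf dist xl yl i j(1) ji[symmetric] xi j(2)] entry_cross[OF wf dist ol yl i j(1) ji[symmetric] oi j(2)] by simp
  next
    fix i x assume i': "i < length nz" and x: "x \<in> blk nz i"
    have i: "i < length ts" using i' by simp
    show "(\<Sum>y\<in>blk nz i. ?M $$ (x,y)) = (\<Sum>y\<in>blk nz i. ?M $$ (off nz i, y))"
      unfolding blk_rowsum[OF i x] blk_rowsum[OF i off_in_blk[OF i]] ..
  qed
  also have "(\<Prod>i<length nz. char_poly (redblk ?M (off nz i) (nz ! i))) = (\<Prod>i<length ts. char_poly (redblk (Bk E ts \<alpha> \<beta> \<gamma> \<delta> i) 0 (nz ! i)))"
    unfolding length_map by (rule prod.cong[OF refl], subst redblk_Bk[OF wf dist], auto)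
  finally show ?thesis .
qed

lemma quot_entry: assumes i: "i < length ts" and j: "j < length ts"
  shows "quot (UL \<alpha> \<beta> \<gamma> \<delta> (Node E ts)) nz $$ (i,j) =
    (if i = j then cval E ts \<alpha> \<beta> \<gamma> \<delta> i else real (nz ! j) * (\<alpha> * (if adj E i j then 1 else 0) + \<gamma>))"
proof (cases "i = j")
  case True thus ?thesis using i blk_rowsum[OF i off_in_blk[OF i]] by (simp add: quot_def cval_def[OF wf dist] Let_def del: nth_map)
next
  case False
  have N: "sum_list nz = length (leaves (Node E ts))" by (rule ns_sum[OF wf dist])
  have ol: "off nz i < length (leaves (Node E ts))" using blk_le[of i nz, OF _ off_in_blk[OF i]] N i by simp
  have oi: "leaves (Node E ts) ! off nz i \<in> set (leaves (ts ! i))" using blk_iff[OF wf dist ol i] off_in_blk[OF i] by simp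
  have "(\<Sum>y\<in>blk nz j. UL \<alpha> \<beta> \<gamma> \<delta> (Node E ts) $$ (off nz i, y)) = (\<Sum>y\<in>blk nz j. \<alpha> * (if adj E i j then 1 else 0) + \<gamma>)"
  proof (rule sum.cong[OF refl])
    fix y assume y: "y \<in> blk nz j"
    have yl: "y < length (leaves (Node E ts))" using blk_le[of j nz y] y j N by simp
    have yj: "leaves (Node E ts) ! y \<in> set (leaves (ts ! j))" using blk_iff[OF wf dist yl j] y by simp
    show "UL \<alpha> \<beta> \<gamma> \<delta> (Node E ts) $$ (off nz i, y) = \<alpha> * (if adj E i j then 1 else 0) + \<gamma>"
      by (rule entry_cross[OF wf dist ol yl i j False oi yj])
  qed
  also have "\<dots> = real (nz ! j) * (\<alpha> * (if adj E i j then 1 else 0) + \<gamma>)" by (simp add: blk_def)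
  finally show ?thesis using False i j by (simp add: quot_def)
qed

lemma Unode_entry: assumes i: "i < length ts" and j: "j < length ts"
  shows "Unode \<alpha> \<beta> \<gamma> \<delta> (Node E ts) $$ (i,j) = sqrt (real (nz ! i) * real (nz ! j)) *
     (\<alpha> * (if adj E i j then 1 else 0) + \<gamma> * (if i = j then 0 else 1)) + (if i = j then cval E ts \<alpha> \<beta> \<gamma> \<delta> i else 0)"
  using i j by (simp add: Unode_def node_graph_def node_children_def Let_def cval_def[OF wf dist])

lemma Unode_carrier: "Unode \<alpha> \<beta> \<gamma> \<delta> (Node E ts) \<in> carrier_mat (length ts) (length ts)"
  by (simp add: Unode_def node_graph_def node_children_def Let_def)

lemma Unode_similar: "similar_mat (Unode \<alpha> \<beta> \<gamma> \<delta> (Node E ts)) (quot (UL \<alpha> \<beta> \<gamma> \<delta> (Node E ts)) nz)"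
proof -
  let ?k = "length ts"
  let ?Q = "quot (UL \<alpha> \<beta> \<gamma> \<delta> (Node E ts)) nz"
  define D where "D = mat ?k ?k (\<lambda>(i,j). if i = j then sqrt (real (nz ! i)) else 0)"
  define Di where "Di = mat ?k ?k (\<lambda>(i,j). if i = j then 1 / sqrt (real (nz ! i)) else 0)"
  have Q: "?Q \<in> carrier_mat ?k ?k" by (simp add: quot_def)
  have D: "D \<in> carrier_mat ?k ?k" and Di: "Di \<in> carrier_mat ?k ?k" by (auto simp: D_def Di_def)
  have pos: "\<And>i. i < ?k \<Longrightarrow> sqrt (real (nz ! i)) > 0" using ns_pos[OF wf dist] by (simp del: nth_map) (metis Suc_le_eq of_nat_0_less_iff nth_map)
  have DDi: "D * Di = 1\<^sub>m ?k"
  proof (rule eq_matI)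
    fix i j assume "i < dim_row (1\<^sub>m ?k :: real mat)" "j < dim_col (1\<^sub>m ?k :: real mat)"
    hence i: "i < ?k" and j: "j < ?k" by auto
    have "(D * Di) $$ (i,j) = sqrt (real (nz ! i)) * Di $$ (i,j)"
      unfolding D_def by (rule diag_mult_left[OF Di i j])
    thus "(D * Di) $$ (i,j) = (1\<^sub>m ?k :: real mat) $$ (i,j)"
      using pos[OF i] pos[OF j] i j by (simp add: Di_def del: nth_map)
  qed (auto simp: D_def Di_def)
  have DiD: "Di * D = 1\<^sub>m ?k"
  proof (rule eq_matI)
    fix i j assume "i < dim_row (1\<^sub>m ?k :: real mat)" "j < dim_col (1\<^sub>m ?k :: real mat)"
    hence i: "i < ?k" and j: "j < ?k" by auto
    have "(Di * D) $$ (i,j) = 1 / sqrt (real (nz ! i)) * D $$ (i,j)"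
      unfolding Di_def by (rule diag_mult_left[OF D i j])
    thus "(Di * D) $$ (i,j) = (1\<^sub>m ?k :: real mat) $$ (i,j)"
      using pos[OF i] pos[OF j] i j by (simp add: D_def del: nth_map)
  qed (auto simp: D_def Di_def)
  have eq: "Unode \<alpha> \<beta> \<gamma> \<delta> (Node E ts) = D * ?Q * Di"
  proof (rule eq_matI)
    fix i j assume "i < dim_row (D * ?Q * Di)" "j < dim_col (D * ?Q * Di)"
    hence i: "i < ?k" and j: "j < ?k" by (auto simp: D_def Di_def)
    have DQ: "D * ?Q \<in> carrier_mat ?k ?k" using D Q by auto
    have "(D * ?Q * Di) $$ (i,j) = (D * ?Q) $$ (i,j) * (1 / sqrt (real (nz ! j)))"
      unfolding Di_def by (rule diag_mult_right[OF DQ i j])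
    also have "(D * ?Q) $$ (i,j) = sqrt (real (nz ! i)) * ?Q $$ (i,j)"
      unfolding D_def by (rule diag_mult_left[OF Q i j])
    finally have 1: "(D * ?Q * Di) $$ (i,j) = sqrt (real (nz ! i)) * ?Q $$ (i,j) / sqrt (real (nz ! j))" by simp
    have sj: "real (nz ! j) = sqrt (real (nz ! j)) * sqrt (real (nz ! j))" by simp
    show "Unode \<alpha> \<beta> \<gamma> \<delta> (Node E ts) $$ (i,j) = (D * ?Q * Di) $$ (i,j)"
    proof (cases "i = j")
      case True
      thus ?thesis unfolding 1 Unode_entry[OF i j] quot_entry[OF i j] using pos[OF i] by (simp add: adj_def)
    next
      case False
      have "sqrt (real (nz ! i)) * (real (nz ! j) * (\<alpha> * (if adj E i j then 1 else 0) + \<gamma>)) / sqrt (real (nz ! j))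
        = sqrt (real (nz ! i)) * sqrt (real (nz ! j)) * (\<alpha> * (if adj E i j then 1 else 0) + \<gamma>)"
        using pos[OF j] by (subst sj, simp add: field_simps)
      thus ?thesis unfolding 1 Unode_entry[OF i j] quot_entry[OF i j] using False by (simp add: real_sqrt_mult)
    qed
  qed (auto simp: Unode_def node_graph_def node_children_def Let_def D_def Di_def)
  show ?thesis
    by (rule similar_matI[OF _ DDi DiD eq], insert Unode_carrier Q D Di, auto)
qed

lemma spec_UL: "spec (UL \<alpha> \<beta> \<gamma> \<delta> (Node E ts)) = spec (Unode \<alpha> \<beta> \<gamma> \<delta> (Node E ts))
  + (\<Sum>i<length ts. spec (redblk (Bk E ts \<alpha> \<beta> \<gamma> \<delta> i) 0 (nz ! i)))"
proof -
  have "spec (UL \<alpha> \<beta> \<gamma> \<delta> (Node E ts)) = spec (quot (UL \<alpha> \<beta> \<gamma> \<delta> (Node E ts)) nz)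
    + (\<Sum>i<length ts. spec (redblk (Bk E ts \<alpha> \<beta> \<gamma> \<delta> i) 0 (nz ! i)))"
    by (rule spec_mult[OF UL_carrier _ _ _ cp_UL], auto simp: quot_def redblk_def)
  also have "spec (quot (UL \<alpha> \<beta> \<gamma> \<delta> (Node E ts)) nz) = spec (Unode \<alpha> \<beta> \<gamma> \<delta> (Node E ts))"
    by (rule spec_similar[OF Unode_carrier _ Unode_similar, symmetric], simp add: quot_def)
  finally show ?thesis .
qed

lemma spec_Bk: assumes i: "i < length ts"
  shows "spec (Bk E ts \<alpha> \<beta> \<gamma> \<delta> i) = add_mset (complex_of_real (cval E ts \<alpha> \<beta> \<gamma> \<delta> i)) (spec (redblk (Bk E ts \<alpha> \<beta> \<gamma> \<delta> i) 0 (nz ! i)))"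
proof (rule spec_linear[OF Bk_carrier[OF wf dist]])
  show "redblk (Bk E ts \<alpha> \<beta> \<gamma> \<delta> i) 0 (nz ! i) \<in> carrier_mat (nz ! i - 1) (nz ! i - 1)" by (simp add: redblk_def)
  show "char_poly (Bk E ts \<alpha> \<beta> \<gamma> \<delta> i) = [:- cval E ts \<alpha> \<beta> \<gamma> \<delta> i, 1:] * char_poly (redblk (Bk E ts \<alpha> \<beta> \<gamma> \<delta> i) 0 (nz ! i))"
  proof (rule char_poly_rowsum)
    show "Bk E ts \<alpha> \<beta> \<gamma> \<delta> i \<in> carrier_mat (nz ! i) (nz ! i)" by (rule Bk_carrier[OF wf dist])
    show "1 \<le> nz ! i" by (rule ns_pos[OF wf dist i])
    fix x assume "x < nz ! i"
    thus "(\<Sum>y<nz ! i. Bk E ts \<alpha> \<beta> \<gamma> \<delta> i $$ (x,y)) = cval E ts \<alpha> \<beta> \<gamma> \<delta> i"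
      by (rule Bk_rowsum[OF wf dist i regc[OF i]])
  qed
qed

lemma q_in_spec: assumes r: "regular (set (leaves (Node E ts))) (compose (Node E ts))"
  shows "complex_of_real ((\<alpha> + \<delta>) * real (reg (set (leaves (Node E ts))) (compose (Node E ts))) + \<beta> + \<gamma> * real (length (leaves (Node E ts))))
     \<in># spec (Unode \<alpha> \<beta> \<gamma> \<delta> (Node E ts))"
proof (rule spec_root[OF Unode_carrier])
  let ?q = "(\<alpha> + \<delta>) * real (reg (set (leaves (Node E ts))) (compose (Node E ts))) + \<beta> + \<gamma> * real (length (leaves (Node E ts)))"
  have N: "sum_list nz = length (leaves (Node E ts))" by (rule ns_sum[OF wf dist])
  have "poly (char_poly (quot (UL \<alpha> \<beta> \<gamma> \<delta> (Node E ts)) nz)) ?q = 0"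
  proof (rule quot_root[OF M_carrier])
    show "0 < length nz" using wf by auto
    show "\<And>i. i < length nz \<Longrightarrow> 1 \<le> nz ! i" using ns_pos[OF wf dist] by simp
    fix x assume x: "x < sum_list nz"
    hence x': "x < length (leaves (Node E ts))" using N by simp
    show "(\<Sum>y<sum_list nz. UL \<alpha> \<beta> \<gamma> \<delta> (Node E ts) $$ (x,y)) = ?q"
      unfolding N rowsum_UL[OF dist x'] reg_deg[OF r nth_mem[OF x']] by (simp add: algebra_simps)
  qed
  thus "poly (char_poly (Unode \<alpha> \<beta> \<gamma> \<delta> (Node E ts))) ?q = 0"
    using char_poly_similar[OF Unode_similar] by simp
qed

end

lemma IV_Leaf: "internal_vertices (Leaf x) = {}"
proof -
  have "subtree (Leaf x) p = Some s \<Longrightarrow> \<not> is_internal s" for p s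
    by (cases p, auto simp: is_internal_def)
  thus ?thesis unfolding internal_vertices_def by auto
qed

lemma IV_Node: "internal_vertices (Node E ts) = insert [] (\<Union>i<length ts. (Cons i) ` internal_vertices (ts ! i))"
proof -
  have "p \<in> internal_vertices (Node E ts) \<longleftrightarrow> p \<in> insert [] (\<Union>i<length ts. (Cons i) ` internal_vertices (ts ! i))" for p
  proof (cases p)
    case Nil thus ?thesis by (simp add: internal_vertices_def is_internal_def)
  next
    case (Cons i q) thus ?thesis by (auto simp: internal_vertices_def)
  qed
  thus ?thesis by blast
qed

lemma IV_finite: "finite (internal_vertices t)"
proof (induction t)
  case (Leaf x) thus ?case by (simp add: IV_Leaf)
next
  case (Node E ts) thus ?case by (simp add: IV_Node)
qed

lemma Npath_Cons: assumes i: "i < length ts"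
  shows "Npath (Node E ts) (i # w) = Nblock E ts i + Npath (ts ! i) w"
proof -
  have "Npath (Node E ts) (i # w) = (\<Sum>j<Suc (length w).
      let u = the (subtree (Node E ts) (take j (i # w))) in Nblock (node_graph u) (node_children u) ((i # w) ! j))"
    unfolding Npath_def by simp
  also have "\<dots> = Nblock E ts i + (\<Sum>j<length w.
      let u = the (subtree (Node E ts) (take (Suc j) (i # w))) in Nblock (node_graph u) (node_children u) ((i # w) ! Suc j))"
    unfolding sum.lessThan_Suc_shift by (simp add: node_graph_def node_children_def)
  also have "(\<Sum>j<length w.
      let u = the (subtree (Node E ts) (take (Suc j) (i # w))) in Nblock (node_graph u) (node_children u) ((i # w) ! Suc j))
    = Npath (ts ! i) w" unfolding Npath_def using i by simp
  finally show ?thesis .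
qed

definition F :: "real \<Rightarrow> real \<Rightarrow> real \<Rightarrow> real \<Rightarrow> stree \<Rightarrow> nat list \<Rightarrow> complex multiset" where
  "F \<alpha> \<beta> \<gamma> \<delta> T = (\<lambda>w. let t = the (subtree T w);
            q = (\<alpha> + \<delta>) * real (reg (set (leaves t)) (compose t)) + \<beta> + \<gamma> * real (length (leaves t))
        in mu_shift (complex_of_real q) (complex_of_real (\<delta> * real (Npath T w)))
             (spec (Unode \<alpha> \<beta> \<gamma> \<delta> t)))"

lemma F_Cons: assumes i: "i < length ts"
  shows "F \<alpha> \<beta> \<gamma> \<delta> (Node E ts) (i # w) = image_mset (\<lambda>x. x + complex_of_real (\<delta> * real (Nblock E ts i))) (F \<alpha> \<beta> \<gamma> \<delta> (ts ! i) w)"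
  unfolding F_def Let_def mu_shift_def Npath_Cons[OF i] using i
  by (simp add: multiset.map_comp o_def algebra_simps)

lemma image_mset_sum: "image_mset f (sum g A) = (\<Sum>x\<in>A. image_mset f (g x))"
  by (induction A rule: infinite_finite_induct, auto)

lemma main_ind: "wf_stree t \<Longrightarrow> distinct (leaves t) \<Longrightarrow> is_internal t \<Longrightarrow>
  (\<forall>w\<in>internal_vertices t - {[]}. regular (set (leaves (the (subtree t w)))) (compose (the (subtree t w)))) \<Longrightarrow>
  spec (UL \<alpha> \<beta> \<gamma> \<delta> t) = (\<Sum>w\<in>internal_vertices t - {[]}. F \<alpha> \<beta> \<gamma> \<delta> t w) + spec (Unode \<alpha> \<beta> \<gamma> \<delta> t)"
proof (induction t)
  case (Leaf x) thus ?case by (simp add: is_internal_def)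
next
  case (Node E ts)
  note wf = Node.prems(1) and dist = Node.prems(2) and R = Node.prems(4)
  let ?t = "Node E ts"
  let ?k = "length ts"
  have wfc: "\<And>i. i < ?k \<Longrightarrow> wf_stree (ts ! i)" using wf by simp
  have distc: "\<And>i. i < ?k \<Longrightarrow> distinct (leaves (ts ! i))" by (rule V_dist[OF wf dist])
  have Rc: "\<And>i w. i < ?k \<Longrightarrow> w \<in> internal_vertices (ts ! i) \<Longrightarrow>
      regular (set (leaves (the (subtree (ts ! i) w)))) (compose (the (subtree (ts ! i) w)))"
  proof -
    fix i w assume i: "i < ?k" and w: "w \<in> internal_vertices (ts ! i)"
    have "i # w \<in> internal_vertices ?t - {[]}" unfolding IV_Node using i w by auto
    from R[rule_format, OF this] i
    show "regular (set (leaves (the (subtree (ts ! i) w)))) (compose (the (subtree (ts ! i) w)))"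
      by simp
  qed
  have regc: "\<And>i. i < ?k \<Longrightarrow> regular (set (leaves (ts ! i))) (compose (ts ! i))"
  proof -
    fix i assume i: "i < ?k"
    show "regular (set (leaves (ts ! i))) (compose (ts ! i))"
    proof (cases "ts ! i")
      case (Leaf x) thus ?thesis using regular_leaf by simp
    next
      case (Node E' ts')
      hence "[] \<in> internal_vertices (ts ! i)" by (simp add: IV_Node)
      from Rc[OF i this] show ?thesis by simp
    qed
  qed
  have per: "spec (redblk (Bk E ts \<alpha> \<beta> \<gamma> \<delta> i) 0 (nz ts ! i)) = (\<Sum>w\<in>internal_vertices (ts ! i). F \<alpha> \<beta> \<gamma> \<delta> ?t (i # w))"
    if i: "i < ?k" for i
  proof (cases "ts ! i")
    case (Leaf x)
    have "redblk (Bk E ts \<alpha> \<beta> \<gamma> \<delta> i) 0 (nz ts ! i) \<in> carrier_mat 0 0" using Leaf i by (simp add: redblk_def)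
    thus ?thesis using Leaf by (simp add: IV_Leaf spec_empty)
  next
    case (Node E' ts')
    let ?c = "ts ! i"
    let ?d = "complex_of_real (\<delta> * real (Nblock E ts i))"
    have wf': "wf_stree (Node E' ts')" and dist': "distinct (leaves (Node E' ts'))"
      using wfc[OF i] distc[OF i] Node by auto
    have regc': "\<And>j. j < length ts' \<Longrightarrow> regular (set (leaves (ts' ! j))) (compose (ts' ! j))"
    proof -
      fix j assume j: "j < length ts'"
      show "regular (set (leaves (ts' ! j))) (compose (ts' ! j))"
      proof (cases "ts' ! j")
        case (Leaf x) thus ?thesis using regular_leaf by simp
      next
        case (Node E'' ts'')
        have e: "[] \<in> internal_vertices (ts' ! j)" using Node by (simp add: IV_Node)
        have "[j] \<in> internal_vertices (Node E' ts')" unfolding IV_Node using j e by blast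
        hence "[j] \<in> internal_vertices ?c" using \<open>ts ! i = Node E' ts'\<close> by simp
        from Rc[OF i this] show ?thesis using \<open>ts ! i = Node E' ts'\<close> j by simp
      qed
    qed
    have IH: "spec (UL \<alpha> \<beta> \<gamma> \<delta> ?c) = (\<Sum>w\<in>internal_vertices ?c - {[]}. F \<alpha> \<beta> \<gamma> \<delta> ?c w) + spec (Unode \<alpha> \<beta> \<gamma> \<delta> ?c)"
      by (rule Node.IH[OF nth_mem[OF i] wfc[OF i] distc[OF i]], insert Node Rc[OF i], auto simp: is_internal_def)
    define X where "X = (\<Sum>w\<in>internal_vertices ?c - {[]}. F \<alpha> \<beta> \<gamma> \<delta> ?c w)"
    define Y where "Y = spec (Unode \<alpha> \<beta> \<gamma> \<delta> ?c)"
    define q where "q = (\<alpha> + \<delta>) * real (reg (set (leaves ?c)) (compose ?c)) + \<beta> + \<gamma> * real (length (leaves ?c))"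
    have qY: "complex_of_real q \<in># Y" unfolding Y_def q_def using q_in_spec[OF wf' dist' regc' regc[OF i, unfolded Node]] Node by simp
    have cv: "cval E ts \<alpha> \<beta> \<gamma> \<delta> i = q + \<delta> * real (Nblock E ts i)"
      unfolding cval_def[OF wf dist] q_def Let_def using i by (simp add: algebra_simps)
    have "spec (Bk E ts \<alpha> \<beta> \<gamma> \<delta> i) = image_mset (\<lambda>x. x + ?d) (spec (UL \<alpha> \<beta> \<gamma> \<delta> ?c))"
      unfolding Bk_eq[OF wf dist i] using spec_shift[OF UL_carrier, of \<alpha> \<beta> \<gamma> \<delta> ?c "\<delta> * real (Nblock E ts i)"] i by simp
    also have "\<dots> = image_mset (\<lambda>x. x + ?d) (X + add_mset (complex_of_real q) (Y - {#complex_of_real q#}))"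
      unfolding IH X_def[symmetric] Y_def[symmetric] using qY by simp
    also have "\<dots> = add_mset (complex_of_real (cval E ts \<alpha> \<beta> \<gamma> \<delta> i)) (image_mset (\<lambda>x. x + ?d) X + image_mset (\<lambda>x. x + ?d) (Y - {#complex_of_real q#}))"
      unfolding cv by simp
    finally have 1: "spec (redblk (Bk E ts \<alpha> \<beta> \<gamma> \<delta> i) 0 (nz ts ! i)) = image_mset (\<lambda>x. x + ?d) X + image_mset (\<lambda>x. x + ?d) (Y - {#complex_of_real q#})"
      using spec_Bk[OF wf dist regc i, of \<alpha> \<beta> \<gamma> \<delta>] by simp
    have IVc: "internal_vertices ?c = insert [] (internal_vertices ?c - {[]})" using Node by (auto simp: IV_Node)
    have "(\<Sum>w\<in>internal_vertices ?c. F \<alpha> \<beta> \<gamma> \<delta> ?t (i # w)) = F \<alpha> \<beta> \<gamma> \<delta> ?t [i] + (\<Sum>w\<in>internal_vertices ?c - {[]}. F \<alpha> \<beta> \<gamma> \<delta> ?t (i # w))"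
      by (subst IVc, subst sum.insert, auto simp: IV_finite)
    also have "(\<Sum>w\<in>internal_vertices ?c - {[]}. F \<alpha> \<beta> \<gamma> \<delta> ?t (i # w)) = image_mset (\<lambda>x. x + ?d) X"
      unfolding X_def image_mset_sum F_Cons[OF i] ..
    also have "F \<alpha> \<beta> \<gamma> \<delta> ?t [i] = image_mset (\<lambda>x. x + ?d) (Y - {#complex_of_real q#})"
      unfolding F_def Let_def mu_shift_def Y_def q_def using Npath_Cons[OF i, of E "[]"] i by (simp add: Npath_def)
    finally show ?thesis unfolding 1 by (simp add: add.commute)
  qed
  have IVt: "internal_vertices ?t - {[]} = (\<Union>i<?k. (Cons i) ` internal_vertices (ts ! i))"
    unfolding IV_Node by auto
  have "(\<Sum>w\<in>internal_vertices ?t - {[]}. F \<alpha> \<beta> \<gamma> \<delta> ?t w) = (\<Sum>i<?k. \<Sum>w\<in>(Cons i) ` internal_vertices (ts ! i). F \<alpha> \<beta> \<gamma> \<delta> ?t w)"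
    unfolding IVt by (rule sum.UNION_disjoint, auto simp: IV_finite)
  also have "\<dots> = (\<Sum>i<?k. \<Sum>w\<in>internal_vertices (ts ! i). F \<alpha> \<beta> \<gamma> \<delta> ?t (i # w))"
    by (rule sum.cong[OF refl], subst sum.reindex, auto simp: inj_on_def)
  also have "\<dots> = (\<Sum>i<?k. spec (redblk (Bk E ts \<alpha> \<beta> \<gamma> \<delta> i) 0 (nz ts ! i)))"
    by (rule sum.cong[OF refl], rule per[symmetric], simp)
  finally show ?case using spec_UL[OF wf dist regc, of \<alpha> \<beta> \<gamma> \<delta>] by (simp add: add.commute)
qed

theorem mainTheorem13:
  fixes \<alpha> \<beta> \<gamma> \<delta> :: real and T :: stree and n :: nat
  assumes "\<alpha> \<noteq> 0"
    and "wf_stree T"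
    and "leaves T = [0..<n]"
    and "2 \<le> n"
    and "\<forall>w\<in>internal_vertices T - {[]}.
           regular (set (leaves (the (subtree T w)))) (compose (the (subtree T w))) \<and>
           (\<alpha> * \<gamma> > 0 \<or>
            (\<gamma> = 0 \<and> connected_graph (set (leaves (the (subtree T w)))) (compose (the (subtree T w)))))"
  shows "spec (Umat \<alpha> \<beta> \<gamma> \<delta> n (compose T)) =
    (\<Sum>w\<in>internal_vertices T - {[]}.
        let t = the (subtree T w);
            q = (\<alpha> + \<delta>) * real (reg (set (leaves t)) (compose t)) + \<beta> + \<gamma> * real (length (leaves t))
        in mu_shift (complex_of_real q) (complex_of_real (\<delta> * real (Npath T w)))
             (spec (Unode \<alpha> \<beta> \<gamma> \<delta> t)))
    + spec (Unode \<alpha> \<beta> \<gamma> \<delta> T)"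
proof -
  have int: "is_internal T"
  proof (cases T)
    case (Leaf x) thus ?thesis using assms(3,4) by (metis leaves.simps(1) length_Cons length_upt list.size(3) diff_zero not_numeral_le_zero numeral_le_one_iff semiring_norm(69) One_nat_def)
  next
    case (Node E ts) thus ?thesis by (simp add: is_internal_def)
  qed
  have dist: "distinct (leaves T)" using assms(3) by simp
  have R: "\<forall>w\<in>internal_vertices T - {[]}. regular (set (leaves (the (subtree T w)))) (compose (the (subtree T w)))"
    using assms(5) by blast
  have "spec (UL \<alpha> \<beta> \<gamma> \<delta> T) = (\<Sum>w\<in>internal_vertices T - {[]}. F \<alpha> \<beta> \<gamma> \<delta> T w) + spec (Unode \<alpha> \<beta> \<gamma> \<delta> T)"
    by (rule main_ind[OF assms(2) dist int R])
  thus ?thesis unfolding Umat_UL[OF assms(3)] by (simp only: F_def)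
qed

end
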